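(* Consider a sequence (indexed by $N$) of completely randomized nearly uniform designs with $\min_{q\in[Q]}N_q\ge2$, with the constants $\underline c,\overline c$ fixed, satisfying Condition 3 with constant $\Delta$. Let $\hat V_{\hat\gamma}=F^\top\mathrm{diag}(N_q^{-1}\hat S(q,q))_{q\in[Q]}F$. Then (i) $\mathbb E\{\hat V_{\hat\gamma}\}\succeq V_{\hat\gamma}$; (ii) $\|\hat V_{\hat\gamma}-\mathbb E\{\hat V_{\hat\gamma}\}\|_\infty^2=O_{\mathbb P}\big(\|F\|_\infty^4Q^4N^{-3}\Delta^4H^2\big)$; (iii) $\|\hat V_{\hat\gamma}-\mathbb E\{\hat V_{\hat\gamma}\}\|_{\mathrm{op}}^2=O_{\mathbb P}\big(\|F\|_\infty^4Q^4N^{-3}\Delta^4H^4\big)$.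
   Context: Randomization model: there are $N$ units and $Q$ treatment levels with prescribed group sizes $N_1,\dots,N_Q\ge1$, $\sum_qN_q=N$; unit $i\in[N]$ has fixed real potential outcomes $Y_i(1),\dots,Y_i(Q)$. Under complete randomization the treatment vector $Z=(Z_1,\dots,Z_N)$ is uniform over all vectors in $[Q]^N$ with exactly $N_q$ coordinates equal to $q$; the observed outcome is $Y_i=Y_i(Z_i)$. Write $\overline Y(q)=N^{-1}\sum_iY_i(q)$, $S(q,q')=(N-1)^{-1}\sum_i(Y_i(q)-\overline Y(q))(Y_i(q')-\overline Y(q'))$, $S=(S(q,q'))$, $V_{\hat Y}=\mathrm{diag}(N_q^{-1}S(q,q))-N^{-1}S$, $\hat Y_q=N_q^{-1}\sum_{i:Z_i=q}Y_i$ and sample variance $\hat S(q,q)=(N_q-1)^{-1}\sum_{i:Z_i=q}(Y_i-\hat Y_q)^2$. For fixed $F\in\mathbb R^{Q\times H}$, $V_{\hat\gamma}=F^\top V_{\hat Y}F$. Norms: $\|A\|_\infty$ is the maximum absolute entry of a matrix, $\|A\|_{\mathrm{op}}$ the operator (spectral) norm. Nearly uniform design: there are a positive integer $N_0$ and constants $0<\underline c\le\overline c$ with $N_q=c_qN_0$, $\underline c\le c_q\le\overline c$ for all $q$. Condition 3: $\max_{q\in[Q]}N^{-1}\sum_{i=1}^N\{Y_i(q)-\overline Y(q)\}^4\le\Delta^4$. *)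

theory Defs
  imports "HOL-Probability.Probability"
begin

text \<open>Units are 0..<N, treatment levels 0..<Q (shifted from 1..Q), columns of F are 0..<H.
  A treatment vector is a function z :: nat => nat with z i < Q for i < N
  (and z i = 0 outside the units, to make the set of assignments finite).\<close>

definition assignments :: "nat \<Rightarrow> nat \<Rightarrow> (nat \<Rightarrow> nat) \<Rightarrow> (nat \<Rightarrow> nat) set" where
  "assignments N Q Ng =
     {z. (\<forall>i<N. z i < Q) \<and> (\<forall>i. N \<le> i \<longrightarrow> z i = 0) \<and>
         (\<forall>q<Q. card {i. i < N \<and> z i = q} = Ng q)}"

definition complete_rand :: "nat \<Rightarrow> nat \<Rightarrow> (nat \<Rightarrow> nat) \<Rightarrow> (nat \<Rightarrow> nat) pmf" where
  "complete_rand N Q Ng = pmf_of_set (assignments N Q Ng)"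

text \<open>Y i q is the potential outcome of unit i under treatment q.\<close>
definition Ybar :: "nat \<Rightarrow> (nat \<Rightarrow> nat \<Rightarrow> real) \<Rightarrow> nat \<Rightarrow> real" where
  "Ybar N Y q = (\<Sum>i<N. Y i q) / real N"

definition Spop :: "nat \<Rightarrow> (nat \<Rightarrow> nat \<Rightarrow> real) \<Rightarrow> nat \<Rightarrow> nat \<Rightarrow> real" where
  "Spop N Y q q' = (\<Sum>i<N. (Y i q - Ybar N Y q) * (Y i q' - Ybar N Y q')) / (real N - 1)"

definition VY :: "nat \<Rightarrow> (nat \<Rightarrow> nat) \<Rightarrow> (nat \<Rightarrow> nat \<Rightarrow> real) \<Rightarrow> nat \<Rightarrow> nat \<Rightarrow> real" where
  "VY N Ng Y q q' = (if q = q' then Spop N Y q q / real (Ng q) else 0) - Spop N Y q q' / real N"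

definition Vgamma :: "nat \<Rightarrow> nat \<Rightarrow> (nat \<Rightarrow> nat) \<Rightarrow> (nat \<Rightarrow> nat \<Rightarrow> real) \<Rightarrow> (nat \<Rightarrow> nat \<Rightarrow> real)
    \<Rightarrow> nat \<Rightarrow> nat \<Rightarrow> real" where
  "Vgamma N Q Ng Y F h h' = (\<Sum>q<Q. \<Sum>q'<Q. F q h * VY N Ng Y q q' * F q' h')"

definition Yhat :: "nat \<Rightarrow> (nat \<Rightarrow> nat) \<Rightarrow> (nat \<Rightarrow> nat \<Rightarrow> real) \<Rightarrow> (nat \<Rightarrow> nat) \<Rightarrow> nat \<Rightarrow> real" where
  "Yhat N Ng Y z q = (\<Sum>i\<in>{i. i < N \<and> z i = q}. Y i (z i)) / real (Ng q)"

definition Shat :: "nat \<Rightarrow> (nat \<Rightarrow> nat) \<Rightarrow> (nat \<Rightarrow> nat \<Rightarrow> real) \<Rightarrow> (nat \<Rightarrow> nat) \<Rightarrow> nat \<Rightarrow> real" where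
  "Shat N Ng Y z q =
     (\<Sum>i\<in>{i. i < N \<and> z i = q}. (Y i (z i) - Yhat N Ng Y z q)^2) / (real (Ng q) - 1)"

definition Vhat :: "nat \<Rightarrow> nat \<Rightarrow> (nat \<Rightarrow> nat) \<Rightarrow> (nat \<Rightarrow> nat \<Rightarrow> real) \<Rightarrow> (nat \<Rightarrow> nat \<Rightarrow> real)
    \<Rightarrow> (nat \<Rightarrow> nat) \<Rightarrow> nat \<Rightarrow> nat \<Rightarrow> real" where
  "Vhat N Q Ng Y F z h h' = (\<Sum>q<Q. F q h * (Shat N Ng Y z q / real (Ng q)) * F q h')"

definition EVhat :: "nat \<Rightarrow> nat \<Rightarrow> (nat \<Rightarrow> nat) \<Rightarrow> (nat \<Rightarrow> nat \<Rightarrow> real) \<Rightarrow> (nat \<Rightarrow> nat \<Rightarrow> real)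
    \<Rightarrow> nat \<Rightarrow> nat \<Rightarrow> real" where
  "EVhat N Q Ng Y F h h' =
     measure_pmf.expectation (complete_rand N Q Ng) (\<lambda>z. Vhat N Q Ng Y F z h h')"

definition psd :: "nat \<Rightarrow> (nat \<Rightarrow> nat \<Rightarrow> real) \<Rightarrow> bool" where
  "psd H A \<longleftrightarrow> (\<forall>x::nat \<Rightarrow> real. 0 \<le> (\<Sum>h<H. \<Sum>h'<H. x h * A h h' * x h'))"

definition max_norm :: "nat \<Rightarrow> nat \<Rightarrow> (nat \<Rightarrow> nat \<Rightarrow> real) \<Rightarrow> real" where
  "max_norm m n A = Max (insert 0 {\<bar>A i j\<bar> | i j. i < m \<and> j < n})"

definition op_norm :: "nat \<Rightarrow> nat \<Rightarrow> (nat \<Rightarrow> nat \<Rightarrow> real) \<Rightarrow> real" where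
  "op_norm m n A = Sup {sqrt (\<Sum>i<m. (\<Sum>j<n. A i j * x j)^2) | x. (\<Sum>j<n. (x j)^2) \<le> 1}"

definition bigO_P :: "(nat \<Rightarrow> 'a pmf) \<Rightarrow> (nat \<Rightarrow> 'a \<Rightarrow> real) \<Rightarrow> (nat \<Rightarrow> real) \<Rightarrow> bool" where
  "bigO_P P X r \<longleftrightarrow>
     (\<forall>\<epsilon>>0. \<exists>M>0. \<exists>k0. \<forall>k\<ge>k0.
        measure_pmf.prob (P k) {\<omega>. \<bar>X k \<omega>\<bar> > M * r k} < \<epsilon>)"

end

theory Submission
  imports Defs "HOL-Combinatorics.Permutations"
begin


lemma assignments_finite: "finite (assignments n Q m)"
proof -
  let ?r = "\<lambda>z. restrict z {..<n}"
  have inj: "inj_on ?r (assignments n Q m)"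
  proof (rule inj_onI)
    fix x y assume x: "x \<in> assignments n Q m" and y: "y \<in> assignments n Q m" and e: "?r x = ?r y"
    show "x = y"
    proof
      fix i show "x i = y i"
      proof (cases "i < n")
        case True then show ?thesis using e by (metis lessThan_iff restrict_apply')
      next
        case False then show ?thesis using x y by (auto simp: assignments_def)
      qed
    qed
  qed
  have "?r ` assignments n Q m \<subseteq> PiE {..<n} (\<lambda>_. {..<Q})"
    apply (rule image_subsetI) apply (subst restrict_PiE_iff) by (auto simp: assignments_def)
  then have "finite (?r ` assignments n Q m)"
    by (rule finite_subset) (simp add: finite_PiE)
  then show ?thesis using inj finite_image_iff by blast
qed

lemma assignments_exist_aux:
  fixes Q :: nat and m :: "nat \<Rightarrow> nat"
  shows "\<exists>z. (\<forall>i<(\<Sum>q<Q. m q). z i < Q) \<and> (\<forall>i. (\<Sum>q<Q. m q) \<le> i \<longrightarrow> z i = 0) \<and>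
        (\<forall>q<Q. card {i. i < (\<Sum>q<Q. m q) \<and> z i = q} = m q)"
proof (induction Q)
  case 0 then show ?case by (intro exI[of _ "\<lambda>_. 0"]) auto
next
  case (Suc Q)
  then obtain z where z1: "\<forall>i<(\<Sum>q<Q. m q). z i < Q" and z2: "\<forall>i. (\<Sum>q<Q. m q) \<le> i \<longrightarrow> z i = 0"
    and z3: "\<forall>q<Q. card {i. i < (\<Sum>q<Q. m q) \<and> z i = q} = m q" by blast
  define S where "S = (\<Sum>q<Q. m q)"
  define z' where "z' i = (if i < S then z i else if i < S + m Q then Q else 0)" for i
  have sumS: "(\<Sum>q<Suc Q. m q) = S + m Q" by (simp add: S_def)
  show ?case
  proof (intro exI[of _ z'] conjI allI impI)
    fix i assume "i < (\<Sum>q<Suc Q. m q)" then show "z' i < Suc Q"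
      using z1 by (auto simp: z'_def S_def sumS)
  next
    fix i assume "(\<Sum>q<Suc Q. m q) \<le> i" then show "z' i = 0" by (auto simp: z'_def sumS S_def)
  next
    fix q assume q: "q < Suc Q"
    show "card {i. i < (\<Sum>q<Suc Q. m q) \<and> z' i = q} = m q"
    proof (cases "q = Q")
      case True
      have "{i. i < (\<Sum>q<Suc Q. m q) \<and> z' i = q} = {S..<S + m Q}"
      proof (intro set_eqI iffI)
        fix i assume i: "i \<in> {i. i < (\<Sum>q<Suc Q. m q) \<and> z' i = q}"
        have "\<not> i < S" using i z1 True by (auto simp: z'_def S_def)
        then show "i \<in> {S..<S + m Q}" using i unfolding sumS by auto
      next
        fix i assume "i \<in> {S..<S + m Q}"
        then show "i \<in> {i. i < (\<Sum>q<Suc Q. m q) \<and> z' i = q}" unfolding sumS using True by (auto simp: z'_def)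
      qed
      then show ?thesis using True by simp
    next
      case False
      then have qQ: "q < Q" using q by simp
      have "{i. i < (\<Sum>q<Suc Q. m q) \<and> z' i = q} = {i. i < S \<and> z i = q}"
        unfolding sumS using False qQ by (auto simp: z'_def)
      then show ?thesis using z3 qQ by (simp add: S_def)
    qed
  qed
qed

lemma assignments_nonempty: "(\<Sum>q<Q. m q) = n \<Longrightarrow> assignments n Q m \<noteq> {}"
  using assignments_exist_aux[where Q=Q and m=m] by (auto simp: assignments_def)

lemma assignments_perm:
  assumes p: "p permutes {..<n}" and z: "z \<in> assignments n Q m"
  shows "z \<circ> p \<in> assignments n Q m"
proof -
  have pin: "\<And>i. i < n \<Longrightarrow> p i < n" using p by (meson lessThan_iff permutes_in_image)
  have pout: "\<And>i. n \<le> i \<Longrightarrow> p i = i" using p by (simp add: permutes_not_in)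
  have "card {i. i < n \<and> (z \<circ> p) i = q} = card {i. i < n \<and> z i = q}" for q
  proof -
    have "p ` {i. i < n \<and> (z \<circ> p) i = q} = {i. i < n \<and> z i = q}"
    proof
      show "p ` {i. i < n \<and> (z \<circ> p) i = q} \<subseteq> {i. i < n \<and> z i = q}" using pin by auto
      show "{i. i < n \<and> z i = q} \<subseteq> p ` {i. i < n \<and> (z \<circ> p) i = q}"
      proof
        fix j assume j: "j \<in> {i. i < n \<and> z i = q}"
        obtain i where i: "p i = j" using p by (metis permutes_surj surj_def)
        have "i < n" using i j pout by (metis mem_Collect_eq not_le)
        then show "j \<in> p ` {i. i < n \<and> (z \<circ> p) i = q}" using i j by auto
      qed
    qed
    moreover have "inj_on p {i. i < n \<and> (z \<circ> p) i = q}"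
      using p by (meson permutes_inj_on)
    ultimately show ?thesis using card_image by fastforce
  qed
  moreover have "\<forall>i<n. (z \<circ> p) i < Q" using z pin by (simp add: assignments_def)
  moreover have "\<forall>i. n \<le> i \<longrightarrow> (z \<circ> p) i = 0" using z pout by (simp add: assignments_def)
  moreover have "\<forall>q<Q. card {i. i < n \<and> z i = q} = m q" using z by (simp add: assignments_def)
  ultimately show ?thesis unfolding assignments_def by simp
qed

lemma assignments_perm_image:
  assumes p: "p permutes {..<n}"
  shows "(\<lambda>z. z \<circ> p) ` assignments n Q m = assignments n Q m"
proof
  show "(\<lambda>z. z \<circ> p) ` assignments n Q m \<subseteq> assignments n Q m"
    using assignments_perm[OF p] by auto
  show "assignments n Q m \<subseteq> (\<lambda>z. z \<circ> p) ` assignments n Q m"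
  proof
    fix z assume z: "z \<in> assignments n Q m"
    have ip: "inv p permutes {..<n}" using p by (rule permutes_inv)
    have "z = (z \<circ> inv p) \<circ> p" using p by (simp add: comp_assoc permutes_inv_o)
    then show "z \<in> (\<lambda>z. z \<circ> p) ` assignments n Q m"
      using assignments_perm[OF ip z] by blast
  qed
qed

lemma sum_assignments_perm:
  assumes p: "p permutes {..<n}"
  shows "(\<Sum>z\<in>assignments n Q m. f (z \<circ> p)) = (\<Sum>z\<in>assignments n Q m. f z)"
proof -
  have inj: "inj_on (\<lambda>z. z \<circ> p) (assignments n Q m)"
  proof (rule inj_onI)
    fix x y assume "x \<circ> p = y \<circ> p"
    then have "x \<circ> p \<circ> inv p = y \<circ> p \<circ> inv p" by simp
    then show "x = y" by (simp add: comp_assoc permutes_inv_o[OF p])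
  qed
  have "(\<Sum>z\<in>assignments n Q m. f z) = (\<Sum>z\<in>(\<lambda>z. z \<circ> p) ` assignments n Q m. f z)"
    using assignments_perm_image[OF p] by simp
  also have "\<dots> = (\<Sum>z\<in>assignments n Q m. f (z \<circ> p))"
    by (subst sum.reindex[OF inj]) simp
  finally show ?thesis by simp
qed

lemma perm_exists:
  "length xs = length ys \<Longrightarrow> distinct xs \<Longrightarrow> distinct ys \<Longrightarrow> set xs \<subseteq> S \<Longrightarrow> set ys \<subseteq> S
   \<Longrightarrow> \<exists>p. p permutes S \<and> map p ys = xs"
proof (induction xs arbitrary: ys)
  case Nil then show ?case by (intro exI[of _ id]) (auto simp: permutes_id[unfolded id_def])
next
  case (Cons x xs)
  then obtain y ys' where ys: "ys = y # ys'" by (metis length_Suc_conv)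
  with Cons obtain p where p: "p permutes S" "map p ys' = xs" by auto
  define p' where "p' = Transposition.transpose (p y) x \<circ> p"
  have py: "p y \<in> S" using p Cons ys by (auto intro: permutes_in_image[THEN iffD2])
  have "p' permutes S" unfolding p'_def
    using p(1) permutes_swap_id[OF py, of x] Cons by (auto intro: permutes_compose)
  moreover have "map p' ys = x # xs"
  proof -
    have "p y \<notin> set xs"
    proof
      assume "p y \<in> set xs"
      then obtain y' where "y' \<in> set ys'" "p y' = p y" using p(2) by auto
      then show False using Cons ys p(1) by (metis distinct.simps(2) permutes_inj injD)
    qed
    moreover have "x \<notin> set xs" using Cons by simp
    ultimately have "map (Transposition.transpose (p y) x) xs = xs"
      by (intro map_idI) (auto simp: Transposition.transpose_def)
    then show ?thesis using p(2) unfolding p'_def ys by (simp add: Transposition.transpose_def flip: map_map)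
  qed
  ultimately show ?case by (intro exI[of _ p'] conjI)
qed


lemma prod_top_eq: fixes L c :: nat shows "L \<le> c \<Longrightarrow> \<Prod>{c - L + 1..c} = (\<Prod>t<L. c - t)"
proof (induction L)
  case 0 then show ?case by simp
next
  case (Suc L)
  have e: "{c - Suc L + 1..c} = insert (c - L) {c - L + 1..c}"
    using Suc.prems by (auto simp: Suc_diff_Suc)
  have "\<Prod>{c - Suc L + 1..c} = (c - L) * \<Prod>{c - L + 1..c}"
    unfolding e by (subst prod.insert) auto
  then show ?case using Suc by (simp add: mult.commute)
qed

lemma card_distinct_lists:
  fixes G :: "'a set"
  assumes "finite G"
  shows "card {xs. length xs = L \<and> distinct xs \<and> set xs \<subseteq> G} = (\<Prod>t<L. card G - t)"
proof (cases "L \<le> card G")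
  case True
  have "prod (\<lambda>x. x) {card G - L + 1..card G} = (\<Prod>t<L. card G - t)" by (rule prod_top_eq[OF True])
  then show ?thesis using card_lists_distinct_length_eq[OF assms True] by simp
next
  case False
  have "{xs. length xs = L \<and> distinct xs \<and> set xs \<subseteq> G} = {}"
    using False assms by (auto dest: card_mono simp: distinct_card)
  moreover have "(\<Prod>t<L. card G - t) = 0"
    using False by (intro prod_zero) (auto intro!: bexI[of _ "card G"])
  ultimately show ?thesis by (metis card.empty)
qed

lemma map_eq_replicate_iff': "map z ys = replicate (length ys) q \<longleftrightarrow> (\<forall>y\<in>set ys. z y = q)"
  by (induction ys) auto

definition ff :: "nat \<Rightarrow> nat \<Rightarrow> real" where "ff c L = (\<Prod>t<L. real (c - t))"

locale design =
  fixes n Q :: nat and m :: "nat \<Rightarrow> nat" and Y :: "nat \<Rightarrow> nat \<Rightarrow> real"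
  assumes Qpos: "1 \<le> Q" and sizes: "(\<Sum>q<Q. m q) = n" and msize: "\<And>q. q < Q \<Longrightarrow> 2 \<le> m q"
begin

definition "A = assignments n Q m"
definition Ex :: "((nat \<Rightarrow> nat) \<Rightarrow> real) \<Rightarrow> real" where "Ex f = (\<Sum>z\<in>A. f z) / card A"
definition ind :: "(nat \<Rightarrow> nat) \<Rightarrow> nat \<Rightarrow> nat \<Rightarrow> real" where "ind z i q = (if z i = q then 1 else 0)"
definition DL :: "nat \<Rightarrow> nat list set" where "DL L = {xs. length xs = L \<and> distinct xs \<and> set xs \<subseteq> {..<n}}"
definition G :: "(nat \<Rightarrow> nat) \<Rightarrow> nat \<Rightarrow> nat set" where "G z q = {i. i < n \<and> z i = q}"

lemma finA: "finite A" unfolding A_def by (rule assignments_finite)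
lemma neA: "A \<noteq> {}" unfolding A_def using sizes by (rule assignments_nonempty)
lemma cardA: "0 < card A" using finA neA by (simp add: card_gt_0_iff)

lemma cardG: "z \<in> A \<Longrightarrow> q < Q \<Longrightarrow> card (G z q) = m q"
  by (auto simp: A_def assignments_def G_def)
lemma finG: "finite (G z q)" by (auto simp: G_def)

lemma n_ge_m: "q < Q \<Longrightarrow> m q \<le> n"
  using sizes member_le_sum[of q "{..<Q}" m] by auto
lemma n_ge2: "2 \<le> n" using n_ge_m[of 0] msize[of 0] Qpos by auto

lemma Ex_sum: "Ex (\<lambda>z. \<Sum>x\<in>S. f x z) = (\<Sum>x\<in>S. Ex (f x))"
  unfolding Ex_def by (subst sum.swap) (simp add: sum_divide_distrib)
lemma Ex_add: "Ex (\<lambda>z. f z + g z) = Ex f + Ex g"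
  unfolding Ex_def by (simp add: sum.distrib add_divide_distrib)
lemma Ex_diff: "Ex (\<lambda>z. f z - g z) = Ex f - Ex g"
  unfolding Ex_def by (simp add: sum_subtractf diff_divide_distrib)
lemma Ex_cmult: "Ex (\<lambda>z. c * f z) = c * Ex f"
  unfolding Ex_def by (simp add: sum_distrib_left)
lemma Ex_multc: "Ex (\<lambda>z. f z * c) = Ex f * c"
  unfolding Ex_def by (simp add: sum_distrib_right)
lemma Ex_const: "Ex (\<lambda>z. c) = c"
  unfolding Ex_def using cardA by simp
lemma Ex_cong: "(\<And>z. z \<in> A \<Longrightarrow> f z = g z) \<Longrightarrow> Ex f = Ex g"
  unfolding Ex_def by simp
lemma Ex_mono: "(\<And>z. z \<in> A \<Longrightarrow> f z \<le> g z) \<Longrightarrow> Ex f \<le> Ex g"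
  unfolding Ex_def using cardA by (intro divide_right_mono sum_mono) auto
lemma Ex_nonneg: "(\<And>z. z \<in> A \<Longrightarrow> 0 \<le> f z) \<Longrightarrow> 0 \<le> Ex f"
  using Ex_mono[of "\<lambda>_. 0" f] Ex_const by simp
lemma Ex_abs: "\<bar>Ex f\<bar> \<le> Ex (\<lambda>z. \<bar>f z\<bar>)"
  unfolding Ex_def using cardA by (simp add: sum_abs divide_right_mono)

lemma finDL: "finite (DL L)"
  unfolding DL_def by (rule finite_subset[OF _ finite_lists_length_eq[of "{..<n}" L]]) auto

lemma cardDL: "card (DL L) = (\<Prod>t<L. n - t)"
  unfolding DL_def using card_distinct_lists[of "{..<n}" L] by simp

lemma exch_list:
  assumes xs: "xs \<in> DL L"
  shows "Ex (\<lambda>z. f (map z xs)) * card (DL L) = Ex (\<lambda>z. \<Sum>ys\<in>DL L. f (map z ys))"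
proof -
  have "Ex (\<lambda>z. f (map z ys)) = Ex (\<lambda>z. f (map z xs))" if ys: "ys \<in> DL L" for ys
  proof -
    obtain p where p: "p permutes {..<n}" "map p ys = xs"
      using perm_exists[of xs ys "{..<n}"] xs ys by (auto simp: DL_def)
    have "(\<Sum>z\<in>A. f (map z xs)) = (\<Sum>z\<in>A. f (map (z \<circ> p) ys))"
      using p(2) by (simp flip: p(2))
    also have "\<dots> = (\<Sum>z\<in>A. f (map z ys))"
      unfolding A_def by (rule sum_assignments_perm[OF p(1), where f = "\<lambda>z. f (map z ys)"])
    finally show ?thesis unfolding Ex_def by simp
  qed
  then show ?thesis by (simp add: Ex_sum)
qed

lemma count_same:
  assumes z: "z \<in> A" and q: "q < Q"
  shows "card {ys \<in> DL L. map z ys = replicate L q} = (\<Prod>t<L. m q - t)"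
proof -
  have "{ys \<in> DL L. map z ys = replicate L q} = {xs. length xs = L \<and> distinct xs \<and> set xs \<subseteq> G z q}"
    unfolding DL_def G_def using map_eq_replicate_iff'[of z _ q] by fastforce
  then show ?thesis using card_distinct_lists[OF finG[of z q], of L] cardG[OF z q] by simp
qed

lemma count_mixed:
  assumes z: "z \<in> A" and q: "q < Q" and s: "s < Q" and qs: "q \<noteq> s"
  shows "card {ys \<in> DL 4. map z ys = [q,q,s,s]} = m q * (m q - 1) * (m s * (m s - 1))"
proof -
  let ?D = "\<lambda>H. {xs. length xs = 2 \<and> distinct xs \<and> set xs \<subseteq> H}"
  have cD: "card (?D (G z r)) = m r * (m r - 1)" if "r < Q" for r
    using card_distinct_lists[OF finG[of z r], of 2] cardG[OF z that]
    by (simp add: numeral_2_eq_2 lessThan_Suc)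
  have eq: "{ys \<in> DL 4. map z ys = [q,q,s,s]} = (\<lambda>(u,v). u @ v) ` (?D (G z q) \<times> ?D (G z s))"
  proof (intro set_eqI iffI)
    fix ys assume "ys \<in> {ys \<in> DL 4. map z ys = [q,q,s,s]}"
    then obtain a b c d where ys: "ys = [a,b,c,d]" and yd: "ys \<in> DL 4" and ym: "map z ys = [q,q,s,s]"
      by (auto simp: DL_def numeral_eq_Suc length_Suc_conv)
    then have "[a,b] \<in> ?D (G z q)" "[c,d] \<in> ?D (G z s)" by (auto simp: DL_def G_def)
    moreover have "ys = [a,b] @ [c,d]" using ys by simp
    ultimately show "ys \<in> (\<lambda>(u,v). u @ v) ` (?D (G z q) \<times> ?D (G z s))"
      by (intro image_eqI[where x="([a,b],[c,d])"]) simp_all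
  next
    fix ys assume "ys \<in> (\<lambda>(u,v). u @ v) ` (?D (G z q) \<times> ?D (G z s))"
    then obtain u v where ys: "ys = u @ v" and u: "u \<in> ?D (G z q)" and v: "v \<in> ?D (G z s)" by auto
    obtain a b where "u = [a,b]" using u by (auto simp: numeral_2_eq_2 length_Suc_conv)
    moreover obtain c d where "v = [c,d]" using v by (auto simp: numeral_2_eq_2 length_Suc_conv)
    ultimately show "ys \<in> {ys \<in> DL 4. map z ys = [q,q,s,s]}"
      using ys u v qs by (auto simp: DL_def G_def)
  qed
  have inj: "inj_on (\<lambda>(u,v). u @ v) (?D (G z q) \<times> ?D (G z s))"
    by (rule inj_onI) auto
  show ?thesis unfolding eq card_image[OF inj] card_cartesian_product cD[OF q] cD[OF s] ..
qed

lemma DL_le: "xs \<in> DL L \<Longrightarrow> L \<le> n"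
  unfolding DL_def by (metis (mono_tags, lifting) card_lessThan card_mono distinct_card finite_lessThan mem_Collect_eq)

lemma ff_pos: "L \<le> c \<Longrightarrow> 0 < ff c L"
  unfolding ff_def by (intro prod_pos) auto

lemma P_same:
  assumes xs: "xs \<in> DL L" and q: "q < Q"
  shows "Ex (\<lambda>z. if map z xs = replicate L q then 1 else 0) = ff (m q) L / ff n L"
proof -
  have "Ex (\<lambda>z. if map z xs = replicate L q then 1 else 0) * card (DL L)
        = Ex (\<lambda>z. \<Sum>ys\<in>DL L. if map z ys = replicate L q then 1 else 0)"
    by (rule exch_list[OF xs])
  also have "\<dots> = Ex (\<lambda>z. ff (m q) L)"
  proof (rule Ex_cong)
    fix z assume z: "z \<in> A"
    have "DL L \<inter> {ys. map z ys = replicate L q} = {ys \<in> DL L. map z ys = replicate L q}" by auto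
    then show "(\<Sum>ys\<in>DL L. if map z ys = replicate L q then 1 else 0) = ff (m q) L"
      by (simp add: sum.If_cases finDL count_same[OF z q] ff_def)
  qed
  also have "\<dots> = ff (m q) L" by (rule Ex_const)
  finally have "Ex (\<lambda>z. if map z xs = replicate L q then 1 else 0) * ff n L = ff (m q) L"
    by (simp add: cardDL ff_def)
  then show ?thesis using ff_pos[OF DL_le[OF xs]] by (simp add: eq_divide_eq)
qed

lemma P_mixed:
  assumes xs: "xs \<in> DL 4" and q: "q < Q" and s: "s < Q" and qs: "q \<noteq> s"
  shows "Ex (\<lambda>z. if map z xs = [q,q,s,s] then 1 else 0) = ff (m q) 2 * ff (m s) 2 / ff n 4"
proof -
  have "Ex (\<lambda>z. if map z xs = [q,q,s,s] then 1 else 0) * card (DL 4)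
        = Ex (\<lambda>z. \<Sum>ys\<in>DL 4. if map z ys = [q,q,s,s] then 1 else 0)"
    by (rule exch_list[OF xs])
  also have "\<dots> = Ex (\<lambda>z. ff (m q) 2 * ff (m s) 2)"
  proof (rule Ex_cong)
    fix z assume z: "z \<in> A"
    have "DL 4 \<inter> {ys. map z ys = [q,q,s,s]} = {ys \<in> DL 4. map z ys = [q,q,s,s]}" by auto
    then show "(\<Sum>ys\<in>DL 4. if map z ys = [q,q,s,s] then 1 else 0) = ff (m q) 2 * ff (m s) 2"
      by (simp add: sum.If_cases finDL count_mixed[OF z q s qs] ff_def numeral_2_eq_2 lessThan_Suc)
  qed
  also have "\<dots> = ff (m q) 2 * ff (m s) 2" by (rule Ex_const)
  finally have "Ex (\<lambda>z. if map z xs = [q,q,s,s] then 1 else 0) * ff n 4 = ff (m q) 2 * ff (m s) 2"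
    by (simp add: cardDL ff_def)
  then show ?thesis using ff_pos[OF DL_le[OF xs]] by (simp add: eq_divide_eq)
qed

end


lemma sum_ind_filter:
  fixes f :: "nat \<Rightarrow> real"
  shows "(\<Sum>i<n. (if z i = q then 1 else 0) * f i) = (\<Sum>i\<in>{i. i < n \<and> z i = q}. f i)"
proof -
  have "{i. i < n \<and> z i = q} = {i \<in> {..<n}. z i = q}" by auto
  moreover have "(\<Sum>i<n. (if z i = q then 1 else 0) * f i) = (\<Sum>i<n. if z i = q then f i else 0)"
    by (intro sum.cong) auto
  moreover have "sum f {i \<in> {..<n}. z i = q} = (\<Sum>i<n. if z i = q then f i else 0)"
    by (rule sum.inter_filter) simp
  ultimately show ?thesis by simp
qed

lemma double_sum_sq:
  fixes x :: "nat \<Rightarrow> real"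
  assumes "finite G"
  shows "(\<Sum>i\<in>G. \<Sum>j\<in>G. (x i - x j)^2 / 2) = card G * (\<Sum>i\<in>G. (x i)^2) - (\<Sum>i\<in>G. x i)^2"
proof -
  have "(\<Sum>i\<in>G. \<Sum>j\<in>G. (x i - x j)^2 / 2)
      = (\<Sum>i\<in>G. \<Sum>j\<in>G. (x i)^2 / 2 + (x j)^2 / 2 - x i * x j)"
    by (intro sum.cong refl) (simp add: power2_diff field_simps)
  also have "\<dots> = (\<Sum>i\<in>G. card G * (x i)^2 / 2 + (\<Sum>j\<in>G. (x j)^2) / 2 - x i * (\<Sum>j\<in>G. x j))"
    by (intro sum.cong refl) (simp add: sum.distrib sum_subtractf sum_distrib_left sum_divide_distrib)
  also have "\<dots> = card G * (\<Sum>i\<in>G. (x i)^2) / 2 + card G * (\<Sum>j\<in>G. (x j)^2) / 2 - (\<Sum>i\<in>G. x i) * (\<Sum>j\<in>G. x j)"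
    by (simp only: sum.distrib sum_subtractf)
       (simp add: sum_distrib_right[symmetric] sum_divide_distrib[symmetric] sum_distrib_left[symmetric])
  also have "\<dots> = card G * (\<Sum>i\<in>G. (x i)^2) - (\<Sum>i\<in>G. x i)^2"
    by (simp add: power2_eq_square)
  finally show ?thesis .
qed

lemma centered_sq:
  fixes x :: "nat \<Rightarrow> real"
  assumes "finite G" "card G > 0"
  shows "(\<Sum>i\<in>G. (x i - (\<Sum>j\<in>G. x j) / card G)^2) = (\<Sum>i\<in>G. (x i)^2) - (\<Sum>i\<in>G. x i)^2 / card G"
proof -
  let ?c = "(\<Sum>j\<in>G. x j) / card G"
  have "(\<Sum>i\<in>G. (x i - ?c)^2) = (\<Sum>i\<in>G. (x i)^2 - 2 * ?c * x i + ?c^2)"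
    by (intro sum.cong refl) (simp add: power2_diff)
  also have "\<dots> = (\<Sum>i\<in>G. (x i)^2) - 2 * ?c * (\<Sum>i\<in>G. x i) + card G * ?c^2"
    by (simp add: sum.distrib sum_subtractf sum_distrib_left)
  also have "\<dots> = (\<Sum>i\<in>G. (x i)^2) - (\<Sum>i\<in>G. x i)^2 / card G"
    using assms by (simp add: field_simps power2_eq_square)
  finally show ?thesis .
qed

context design
begin

lemma Ex_divc: "Ex (\<lambda>z. f z / c) = Ex f / c"
  using Ex_multc[of f "1/c"] by simp

definition e :: "nat \<Rightarrow> nat \<Rightarrow> real" where "e q i = Y i q - Ybar n Y q"
definition d :: "nat \<Rightarrow> nat \<Rightarrow> nat \<Rightarrow> real" where "d q i j = (e q i - e q j)^2 / 2"
definition p :: "nat \<Rightarrow> real" where "p q = ff (m q) 2 / ff n 2"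

lemma d_nonneg: "0 \<le> d q i j" by (simp add: d_def)
lemma d_sym: "d q i j = d q j i" by (simp add: d_def power2_commute)
lemma d_diag: "d q i i = 0" by (simp add: d_def)

lemma sum_e: "(\<Sum>i<n. e q i) = 0"
  using n_ge2 by (simp add: e_def Ybar_def sum_subtractf)

lemma ff2: "ff c 2 = real c * (real c - 1)" if "1 \<le> c"
  using that by (simp add: ff_def numeral_2_eq_2 lessThan_Suc of_nat_diff)

lemma sum_d: "(\<Sum>i<n. \<Sum>j<n. d q i j) = n * (\<Sum>i<n. (e q i)^2)"
  using double_sum_sq[of "{..<n}" "e q"] sum_e[of q] by (simp add: d_def)

lemma Spop_eq: "Spop n Y q q' = (\<Sum>i<n. e q i * e q' i) / (real n - 1)"
  by (simp add: Spop_def e_def)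

lemma Spop_d: "Spop n Y q q = (\<Sum>i<n. \<Sum>j<n. d q i j) / (real n * (real n - 1))"
  using n_ge2 by (simp add: Spop_eq sum_d power2_eq_square)

lemma shat_eq:
  assumes z: "z \<in> A" and q: "q < Q"
  shows "Shat n m Y z q = (\<Sum>i<n. \<Sum>j<n. ind z i q * ind z j q * d q i j) / (real (m q) * (real (m q) - 1))"
proof -
  let ?G = "G z q"
  have cG: "card ?G = m q" by (rule cardG[OF z q])
  have m2: "2 \<le> m q" using msize q by simp
  have yh: "Yhat n m Y z q = (\<Sum>j\<in>?G. Y j q) / card ?G"
    unfolding Yhat_def cG[symmetric] G_def by (intro arg_cong2[where f="(/)"] sum.cong) auto
  have "Shat n m Y z q = (\<Sum>i\<in>?G. (Y i q - Yhat n m Y z q)^2) / (real (m q) - 1)"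
    unfolding Shat_def G_def by (intro arg_cong2[where f="(/)"] sum.cong) auto
  also have "\<dots> = (\<Sum>i\<in>?G. (Y i q - (\<Sum>j\<in>?G. Y j q) / card ?G)^2) / (real (m q) - 1)"
    by (simp only: yh)
  also have "\<dots> = ((\<Sum>i\<in>?G. (Y i q)^2) - (\<Sum>i\<in>?G. Y i q)^2 / card ?G) / (real (m q) - 1)"
    using centered_sq[of ?G "\<lambda>i. Y i q"] finG cG m2 by simp
  also have "\<dots> = (card ?G * (\<Sum>i\<in>?G. (Y i q)^2) - (\<Sum>i\<in>?G. Y i q)^2) / (real (m q) * (real (m q) - 1))"
    using cG m2 by (simp add: field_simps)
  also have "card ?G * (\<Sum>i\<in>?G. (Y i q)^2) - (\<Sum>i\<in>?G. Y i q)^2 = (\<Sum>i\<in>?G. \<Sum>j\<in>?G. d q i j)"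
    using double_sum_sq[OF finG[of z q], of "\<lambda>i. Y i q"] by (simp add: d_def e_def)
  also have "(\<Sum>i\<in>?G. \<Sum>j\<in>?G. d q i j) = (\<Sum>i<n. \<Sum>j<n. ind z i q * ind z j q * d q i j)"
  proof -
    have "(\<Sum>i<n. \<Sum>j<n. ind z i q * ind z j q * d q i j) = (\<Sum>i<n. ind z i q * (\<Sum>j<n. ind z j q * d q i j))"
      by (simp add: sum_distrib_left mult.assoc)
    also have "\<dots> = (\<Sum>i<n. ind z i q * (\<Sum>j\<in>?G. d q i j))"
      unfolding ind_def G_def by (subst sum_ind_filter) simp
    also have "\<dots> = (\<Sum>i\<in>?G. \<Sum>j\<in>?G. d q i j)"
      unfolding ind_def G_def by (rule sum_ind_filter)
    finally show ?thesis by simp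
  qed
  finally show ?thesis .
qed

lemma ind2:
  assumes "i < n" "j < n" "i \<noteq> j" "q < Q"
  shows "Ex (\<lambda>z. ind z i q * ind z j q) = p q"
proof -
  have xs: "[i,j] \<in> DL 2" using assms by (auto simp: DL_def)
  have "Ex (\<lambda>z. ind z i q * ind z j q) = Ex (\<lambda>z. if map z [i,j] = replicate 2 q then 1 else 0)"
    by (intro Ex_cong) (simp add: ind_def numeral_2_eq_2)
  then show ?thesis using P_same[OF xs assms(4)] by (simp add: p_def)
qed

lemma ind2_d:
  assumes "i < n" "j < n" "q < Q"
  shows "Ex (\<lambda>z. ind z i q * ind z j q) * d q i j = p q * d q i j"
  using ind2[OF assms(1,2) _ assms(3)] by (cases "i = j") (auto simp: d_diag)

lemma p_eq: "q < Q \<Longrightarrow> p q = real (m q) * (real (m q) - 1) / (real n * (real n - 1))"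
  using msize[of q] n_ge2 by (simp add: p_def ff2)

lemma Ex_shat:
  assumes q: "q < Q"
  shows "Ex (\<lambda>z. Shat n m Y z q) = Spop n Y q q"
proof -
  have m2: "2 \<le> m q" using msize q by simp
  have "Ex (\<lambda>z. Shat n m Y z q) =
        Ex (\<lambda>z. (\<Sum>i<n. \<Sum>j<n. ind z i q * ind z j q * d q i j) / (real (m q) * (real (m q) - 1)))"
    by (intro Ex_cong shat_eq q)
  also have "\<dots> = (\<Sum>i<n. \<Sum>j<n. Ex (\<lambda>z. ind z i q * ind z j q) * d q i j) / (real (m q) * (real (m q) - 1))"
    by (simp add: Ex_divc Ex_sum Ex_multc)
  also have "\<dots> = (\<Sum>i<n. \<Sum>j<n. p q * d q i j) / (real (m q) * (real (m q) - 1))"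
    by (intro arg_cong2[where f="(/)"] sum.cong refl ind2_d q) auto
  also have "\<dots> = p q * (\<Sum>i<n. \<Sum>j<n. d q i j) / (real (m q) * (real (m q) - 1))"
    by (simp add: sum_distrib_left)
  also have "\<dots> = (\<Sum>i<n. \<Sum>j<n. d q i j) / (real n * (real n - 1))"
  proof -
    have "real (m q) * (real (m q) - 1) > 0" "real n * (real n - 1) > 0" using m2 n_ge2 by auto
    have g: "\<And>a b X :: real. a \<noteq> 0 \<Longrightarrow> (a / b) * X / a = X / b" by simp
    show ?thesis unfolding p_eq[OF q] by (rule g) (use m2 in simp)
  qed
  also have "\<dots> = Spop n Y q q" by (simp add: Spop_d)
  finally show ?thesis .
qed

end


lemma b_bound:
  fixes N :: real assumes "4 \<le> N"
  shows "N*(N-1)/((N-2)*(N-3)) - 1 \<le> 32/N"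
proof -
  have pos: "(N-2)*(N-3) > 0" using assms by (simp add: mult_pos_pos)
  have "N*(N-1)/((N-2)*(N-3)) - 1 = (4*N - 6)/((N-2)*(N-3))"
    using pos by (simp add: field_simps)
  also have "\<dots> \<le> 32/N"
  proof -
    have "(4*N-6)*N \<le> 32*((N-2)*(N-3))"
    proof -
      have "0 \<le> (N-4)*(28*N-42)" using assms by (intro mult_nonneg_nonneg) auto
      then show ?thesis by (simp add: algebra_simps)
    qed
    then show ?thesis using pos assms by (simp add: divide_simps mult.commute)
  qed
  finally show ?thesis .
qed

lemma b_ge: fixes N :: real assumes "4 \<le> N" shows "1 \<le> N*(N-1)/((N-2)*(N-3))"
proof -
  have pos: "(N-2)*(N-3) > 0" using assms by (simp add: mult_pos_pos)
  have "(N-2)*(N-3) \<le> N*(N-1)" using assms by (simp add: algebra_simps)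
  then show ?thesis using pos by simp
qed

lemma alg1: "(F::real) \<noteq> 0 \<Longrightarrow> D \<noteq> 0 \<Longrightarrow> A * B / (F * D) = (A / F) * (B / F) * (F / D)"
  by (simp add: field_simps)
lemma alg2: "(F::real) \<noteq> 0 \<Longrightarrow> D \<noteq> 0 \<Longrightarrow> M \<noteq> 0 \<Longrightarrow> M * R / (F * D) = (M / F) * (M / F) * ((R / M) * (F / D))"
  by (simp add: field_simps)

lemma ff_Suc: "ff c (Suc L) = ff c L * real (c - L)"
  by (simp add: ff_def)

lemma ff_nonneg: "0 \<le> ff c L"
  by (simp add: ff_def prod_nonneg)

lemma ff4: "ff c 4 = ff c 2 * (real (c - 2) * real (c - 3))"
  by (simp add: ff_def numeral_eq_Suc lessThan_Suc)

lemma ff3: "ff c 3 = ff c 2 * real (c - 2)"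
  by (simp add: ff_def numeral_eq_Suc lessThan_Suc)

lemma ff_ratio_le:
  assumes "c \<le> N" "L \<le> N"
  shows "ff c L / ff N L \<le> (real c / real N) ^ L"
  using assms(2)
proof (induction L)
  case 0 then show ?case by (simp add: ff_def)
next
  case (Suc L)
  have NL: "0 < real (N - L)" using Suc.prems by simp
  have fpos: "0 < ff N L" using Suc.prems unfolding ff_def by (intro prod_pos) auto
  have N0: "0 < real N" using Suc.prems by simp
  have r: "real (c - L) / real (N - L) \<le> real c / real N"
  proof (cases "L \<le> c")
    case True
    have LL: "real L * real c \<le> real L * real N" using assms(1) by (intro mult_left_mono) auto
    have "real (c - L) * real N \<le> real c * real (N - L)"
      using True Suc.prems LL by (simp add: of_nat_diff algebra_simps)
    then show ?thesis using NL N0 by (simp add: divide_simps)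
  next
    case False then show ?thesis by simp
  qed
  have "ff c (Suc L) / ff N (Suc L) = (ff c L / ff N L) * (real (c - L) / real (N - L))"
    by (simp add: ff_Suc)
  also have "\<dots> \<le> (real c / real N) ^ L * (real c / real N)"
    using Suc r by (intro mult_mono) (auto simp: ff_nonneg)
  finally show ?case by (simp add: mult.commute)
qed

context design
begin

lemma p_nonneg: "0 \<le> p q" by (simp add: p_def ff_nonneg)

lemma ffn4: "4 \<le> n \<Longrightarrow> ff n 4 = ff n 2 * ((real n - 2) * (real n - 3))"
  by (simp add: ff4 of_nat_diff)

lemma ffn2: "ff n 2 = real n * (real n - 1)"
  using n_ge2 by (simp add: ff2)

lemma eps_mixed:
  assumes n4: "4 \<le> n" and q: "q < Q" and s: "s < Q"
  shows "\<bar>ff (m q) 2 * ff (m s) 2 / ff n 4 - p q * p s\<bar> \<le> 32 * p q * p s / n"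
proof -
  define N where "N = real n"
  have N4: "4 \<le> N" using n4 by (simp add: N_def)
  define b where "b = N*(N-1)/((N-2)*(N-3))"
  have D: "(N-2)*(N-3) > 0" using N4 by (simp add: mult_pos_pos)
  have f2: "ff n 2 > 0" using N4 by (simp add: ffn2 N_def[symmetric])
  have bb: "b = ff n 2 / ((N-2)*(N-3))" by (simp add: b_def ffn2 N_def)
  have eq: "ff (m q) 2 * ff (m s) 2 / ff n 4 = p q * p s * b"
    unfolding p_def bb ffn4[OF n4] N_def using D f2 by (intro alg1) (auto simp: N_def)
  have e1: "p q * p s * b - p q * p s = p q * p s * (b - 1)" by (simp add: algebra_simps)
  have b1: "0 \<le> b - 1" "b - 1 \<le> 32 / N" using b_ge[OF N4] b_bound[OF N4] by (auto simp: b_def)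
  have pp: "0 \<le> p q * p s" by (simp add: p_nonneg)
  have h: "p q * p s * (b - 1) \<le> p q * p s * (32/N)" using pp b1 by (intro mult_left_mono) auto
  have h0: "0 \<le> p q * p s * (b - 1)" using pp b1 by simp
  have "\<bar>p q * p s * b - p q * p s\<bar> \<le> p q * p s * (32 / N)"
    unfolding e1 using h h0 by simp
  then show ?thesis unfolding eq N_def by (simp add: algebra_simps)
qed

lemma eps_same:
  assumes n4: "4 \<le> n" and q: "q < Q"
  shows "\<bar>ff (m q) 4 / ff n 4 - p q * p q\<bar> \<le> 32 * p q * p q * (1 / n + 1 / m q)"
proof -
  define N where "N = real n"
  define a where "a = real (m q)"
  have m2: "2 \<le> m q" using msize q by simp
  have a2: "2 \<le> a" using m2 by (simp add: a_def)
  have N4: "4 \<le> N" using n4 by (simp add: N_def)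
  define b where "b = N*(N-1)/((N-2)*(N-3))"
  define r where "r = real (m q - 2) * real (m q - 3)"
  have D: "(N-2)*(N-3) > 0" using N4 by (simp add: mult_pos_pos)
  have f2: "ff n 2 > 0" using N4 by (simp add: ffn2 N_def[symmetric])
  have fm2: "ff (m q) 2 = a * (a - 1)" using m2 by (simp add: ff2 a_def)
  have fm2p: "a * (a - 1) > 0" using a2 by simp
  define u where "u = r / (a * (a - 1))"
  have bb: "b = ff n 2 / ((N-2)*(N-3))" by (simp add: b_def ffn2 N_def)
  have eq: "ff (m q) 4 / ff n 4 = p q * p q * (u * b)"
    unfolding p_def bb ffn4[OF n4] u_def ff4[of "m q"] r_def[symmetric] fm2[symmetric] N_def
    using D f2 fm2p fm2 by (intro alg2) (auto simp: N_def)
  have r0: "0 \<le> r" by (simp add: r_def)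
  have r_le: "r \<le> a * (a - 1)"
  proof -
    have "real (m q - 2) \<le> a" "real (m q - 3) \<le> a - 1" using m2 by (auto simp: a_def of_nat_diff)
    then show ?thesis unfolding r_def using a2 by (intro mult_mono) auto
  qed
  have u0: "0 \<le> u" using r0 fm2p by (simp add: u_def)
  have u1: "u \<le> 1" using r_le fm2p by (simp add: u_def)
  have one_u: "1 - u \<le> 4 / a"
  proof -
    have "a * (a - 1) - r \<le> 4 * (a - 1)"
    proof (cases "m q = 2")
      case True then show ?thesis by (simp add: r_def a_def)
    next
      case False
      then have "3 \<le> m q" using m2 by simp
      then have "r = (a - 2) * (a - 3)" by (simp add: r_def a_def of_nat_diff)
      then show ?thesis by (simp add: algebra_simps)
    qed
    then have "(a * (a - 1) - r) / (a * (a - 1)) \<le> 4 * (a - 1) / (a * (a - 1))"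
      using fm2p by (intro divide_right_mono) auto
    moreover have "4 * (a - 1) / (a * (a - 1)) = 4 / a" using a2 by (simp add: field_simps)
    moreover have "(a * (a - 1) - r) / (a * (a - 1)) = 1 - u" using fm2p a2 by (simp add: u_def diff_divide_distrib)
    ultimately show ?thesis by simp
  qed
  have b1: "1 \<le> b" "b - 1 \<le> 32 / N" using b_ge[OF N4] b_bound[OF N4] by (auto simp: b_def)
  have up: "u * b - 1 \<le> 32 / N"
  proof -
    have "u * b \<le> 1 * b" using u1 b1 by (intro mult_right_mono) auto
    then show ?thesis using b1 by linarith
  qed
  have lo: "1 - u * b \<le> 4 / a"
  proof -
    have "u \<le> u * b" using u0 b1 by (simp add: mult_le_cancel_left1)
    then show ?thesis using one_u by simp
  qed
  have "\<bar>u * b - 1\<bar> \<le> 32 * (1 / N + 1 / a)"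
  proof -
    have "4 / a \<le> 32 / a" using a2 by (simp add: divide_right_mono)
    moreover have "0 \<le> 32 / N" "0 \<le> 4 / a" using N4 a2 by auto
    ultimately have "u * b - 1 \<le> 32 / N + 32 / a" "-(u * b - 1) \<le> 32 / N + 32 / a"
      using up lo by linarith+
    then have "\<bar>u * b - 1\<bar> \<le> 32 / N + 32 / a" by (simp only: abs_le_iff)
    also have "32 / N + 32 / a = 32 * (1 / N + 1 / a)" by simp
    finally show ?thesis .
  qed
  then have "p q * p q * \<bar>u * b - 1\<bar> \<le> p q * p q * (32 * (1 / N + 1 / a))"
    by (intro mult_left_mono) (simp_all add: p_nonneg)
  moreover have "\<bar>p q * p q * (u * b) - p q * p q\<bar> = p q * p q * \<bar>u * b - 1\<bar>"
  proof -
    have "p q * p q * (u * b) - p q * p q = (p q * p q) * (u * b - 1)" by (simp add: algebra_simps)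
    then show ?thesis by (simp only: abs_mult abs_of_nonneg[OF p_nonneg])
  qed
  ultimately show ?thesis unfolding eq N_def a_def by (simp add: algebra_simps)
qed

end


context design
begin

lemma ind_sq: "ind z i q * ind z i q = ind z i q" by (simp add: ind_def)
lemma ind_nonneg: "0 \<le> ind z i q" by (simp add: ind_def)
lemma ind_le1: "ind z i q \<le> 1" by (simp add: ind_def)

lemma ind3:
  assumes "x < n" "y < n" "w < n" "x \<noteq> y" "x \<noteq> w" "y \<noteq> w" "q < Q"
  shows "Ex (\<lambda>z. ind z x q * ind z y q * ind z w q) = ff (m q) 3 / ff n 3"
proof -
  have xs: "[x,y,w] \<in> DL 3" using assms by (auto simp: DL_def)
  have "Ex (\<lambda>z. ind z x q * ind z y q * ind z w q) = Ex (\<lambda>z. if map z [x,y,w] = replicate 3 q then 1 else 0)"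
    by (intro Ex_cong) (simp add: ind_def numeral_3_eq_3)
  then show ?thesis using P_same[OF xs assms(7)] by simp
qed

lemma ind4s:
  assumes "i < n" "j < n" "k < n" "l < n" "distinct [i,j,k,l]" "q < Q"
  shows "Ex (\<lambda>z. ind z i q * ind z j q * ind z k q * ind z l q) = ff (m q) 4 / ff n 4"
proof -
  have xs: "[i,j,k,l] \<in> DL 4" using assms by (auto simp: DL_def)
  have "Ex (\<lambda>z. ind z i q * ind z j q * ind z k q * ind z l q) = Ex (\<lambda>z. if map z [i,j,k,l] = replicate 4 q then 1 else 0)"
    by (intro Ex_cong) (simp add: ind_def numeral_eq_Suc)
  then show ?thesis using P_same[OF xs assms(6)] by simp
qed

lemma ind4m:
  assumes "i < n" "j < n" "k < n" "l < n" "distinct [i,j,k,l]" "q < Q" "s < Q" "q \<noteq> s"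
  shows "Ex (\<lambda>z. ind z i q * ind z j q * ind z k s * ind z l s) = ff (m q) 2 * ff (m s) 2 / ff n 4"
proof -
  have xs: "[i,j,k,l] \<in> DL 4" using assms by (auto simp: DL_def)
  have "Ex (\<lambda>z. ind z i q * ind z j q * ind z k s * ind z l s) = Ex (\<lambda>z. if map z [i,j,k,l] = [q,q,s,s] then 1 else 0)"
    by (intro Ex_cong) (simp add: ind_def)
  then show ?thesis using P_mixed[OF xs assms(6,7,8)] by simp
qed

definition C :: "nat \<Rightarrow> nat \<Rightarrow> nat \<Rightarrow> nat \<Rightarrow> nat \<Rightarrow> nat \<Rightarrow> real" where
  "C q s i j k l = Ex (\<lambda>z. (ind z i q * ind z j q - p q) * (ind z k s * ind z l s - p s))"

lemma C_eq:
  assumes "i < n" "j < n" "k < n" "l < n" "i \<noteq> j" "k \<noteq> l" "q < Q" "s < Q"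
  shows "C q s i j k l = Ex (\<lambda>z. ind z i q * ind z j q * ind z k s * ind z l s) - p q * p s"
proof -
  have "C q s i j k l = Ex (\<lambda>z. ind z i q * ind z j q * ind z k s * ind z l s
       - p s * (ind z i q * ind z j q) - p q * (ind z k s * ind z l s) + p q * p s)"
    unfolding C_def by (intro Ex_cong) (simp add: algebra_simps)
  also have "\<dots> = Ex (\<lambda>z. ind z i q * ind z j q * ind z k s * ind z l s)
       - p s * Ex (\<lambda>z. ind z i q * ind z j q) - p q * Ex (\<lambda>z. ind z k s * ind z l s) + p q * p s"
    by (simp add: Ex_add Ex_diff Ex_cmult Ex_const)
  also have "\<dots> = Ex (\<lambda>z. ind z i q * ind z j q * ind z k s * ind z l s) - p q * p s"
    using ind2[OF assms(1,2,5,7)] ind2[OF assms(3,4,6,8)] by simp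
  finally show ?thesis .
qed

definition ie :: "nat \<Rightarrow> nat \<Rightarrow> real" where "ie a b = (if a = b then 1 else 0)"

definition eps :: "nat \<Rightarrow> nat \<Rightarrow> real" where
  "eps q s = 32 * p q * p s * (1 / real n + (if q = s then 1 / real (m q) else 0))"

definition Bd :: "nat \<Rightarrow> nat \<Rightarrow> nat \<Rightarrow> nat \<Rightarrow> nat \<Rightarrow> nat \<Rightarrow> real" where
  "Bd q s i j k l = eps q s
     + (ie i k + ie i l + ie j k + ie j l) * (p q * p s + (if q = s then (real (m q) / real n) ^ 3 else 0))
     + (if q = s then (ie i k * ie j l + ie i l * ie j k) * p q else 0)"

lemma eps_nonneg: "0 \<le> eps q s" by (simp add: eps_def p_nonneg)
lemma ie_nonneg: "0 \<le> ie a b" by (simp add: ie_def)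

lemma E4_nonneg: "0 \<le> Ex (\<lambda>z. ind z i q * ind z j q * ind z k s * ind z l s)"
  by (intro Ex_nonneg) (simp add: ind_nonneg)

lemma E4_triple:
  assumes "i < n" "j < n" "k < n" "l < n" "i \<noteq> j" "k \<noteq> l" "q < Q"
    and nd: "\<not> distinct [i,j,k,l]" and ntw: "\<not> (i = k \<and> j = l)" "\<not> (i = l \<and> j = k)"
  shows "Ex (\<lambda>z. ind z i q * ind z j q * ind z k q * ind z l q) \<le> (real (m q) / real n) ^ 3"
proof -
  have key: "\<exists>x y w. x < n \<and> y < n \<and> w < n \<and> x \<noteq> y \<and> x \<noteq> w \<and> y \<noteq> w \<and>
     (\<forall>z. ind z i q * ind z j q * ind z k q * ind z l q = ind z x q * ind z y q * ind z w q)"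
  proof -
    have "i = k \<or> i = l \<or> j = k \<or> j = l" using nd assms(5,6) by auto
    then show ?thesis
    proof (elim disjE)
      assume h: "i = k"
      show ?thesis using h assms ntw
        by (intro exI[of _ i] exI[of _ j] exI[of _ l]) (auto simp: ind_def)
    next
      assume h: "i = l"
      show ?thesis using h assms ntw
        by (intro exI[of _ i] exI[of _ j] exI[of _ k]) (auto simp: ind_def)
    next
      assume h: "j = k"
      show ?thesis using h assms ntw
        by (intro exI[of _ i] exI[of _ j] exI[of _ l]) (auto simp: ind_def)
    next
      assume h: "j = l"
      show ?thesis using h assms ntw
        by (intro exI[of _ i] exI[of _ j] exI[of _ k]) (auto simp: ind_def)
    qed
  qed
  then obtain x y w where xyw: "x < n" "y < n" "w < n" "x \<noteq> y" "x \<noteq> w" "y \<noteq> w"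
    and eq: "\<And>z. ind z i q * ind z j q * ind z k q * ind z l q = ind z x q * ind z y q * ind z w q"
    by blast
  have n3: "3 \<le> n" using DL_le[of "[x,y,w]" 3] xyw by (auto simp: DL_def)
  have "Ex (\<lambda>z. ind z i q * ind z j q * ind z k q * ind z l q) = ff (m q) 3 / ff n 3"
    unfolding eq using ind3[OF xyw assms(7)] .
  also have "\<dots> \<le> (real (m q) / real n) ^ 3"
    by (rule ff_ratio_le[OF n_ge_m[OF assms(7)] n3])
  finally show ?thesis .
qed

lemma C_bound:
  assumes "i < n" "j < n" "k < n" "l < n" "i \<noteq> j" "k \<noteq> l" "q < Q" "s < Q"
  shows "\<bar>C q s i j k l\<bar> \<le> Bd q s i j k l"
proof -
  let ?E4 = "Ex (\<lambda>z. ind z i q * ind z j q * ind z k s * ind z l s)"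
  have CE: "C q s i j k l = ?E4 - p q * p s" by (rule C_eq[OF assms])
  have pp: "0 \<le> p q * p s" by (simp add: p_nonneg)
  have B0: "0 \<le> (ie i k + ie i l + ie j k + ie j l) * (p q * p s + (if q = s then (real (m q) / real n) ^ 3 else 0))"
    by (intro mult_nonneg_nonneg add_nonneg_nonneg) (auto simp: ie_nonneg p_nonneg)
  have B1: "0 \<le> (if q = s then (ie i k * ie j l + ie i l * ie j k) * p q else 0)"
  proof (cases "q = s")
    case True
    have h: "0 \<le> ie i k * ie j l + ie i l * ie j k" by (simp add: ie_nonneg)
    show ?thesis unfolding if_P[OF True] by (rule mult_nonneg_nonneg[OF h p_nonneg])
  next
    case False then show ?thesis by simp
  qed
  show ?thesis
  proof (cases "distinct [i,j,k,l]")
    case True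
    have n4: "4 \<le> n" using DL_le[of "[i,j,k,l]" 4] True assms by (auto simp: DL_def)
    have "\<bar>C q s i j k l\<bar> \<le> eps q s"
    proof (cases "q = s")
      case True': True
      have "?E4 = ff (m q) 4 / ff n 4" using ind4s[OF assms(1-4) True assms(7)] True' by simp
      then show ?thesis using eps_same[OF n4 assms(7)] True' CE by (simp add: eps_def)
    next
      case False
      have "?E4 = ff (m q) 2 * ff (m s) 2 / ff n 4" using ind4m[OF assms(1-4) True assms(7,8) False] .
      then show ?thesis using eps_mixed[OF n4 assms(7,8)] False CE by (simp add: eps_def)
    qed
    then show ?thesis unfolding Bd_def using B0 B1 by linarith
  next
    case False
    have ov: "1 \<le> ie i k + ie i l + ie j k + ie j l"
      using False assms(5,6) by (auto simp: ie_def)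
    have abs_le: "\<bar>C q s i j k l\<bar> \<le> ?E4 + p q * p s"
      using CE E4_nonneg[of i q j k s l] pp by (simp add: abs_le_iff)
    have ppov: "p q * p s \<le> (ie i k + ie i l + ie j k + ie j l) * (p q * p s)"
      using ov pp by (simp add: mult_le_cancel_right1)
    show ?thesis
    proof (cases "q = s")
      case qs: False
      have "?E4 = Ex (\<lambda>z. 0)"
      proof (rule Ex_cong)
        fix z
        have "i = k \<or> i = l \<or> j = k \<or> j = l" using False assms(5,6) by auto
        then show "ind z i q * ind z j q * ind z k s * ind z l s = 0"
          using qs by (auto simp: ind_def)
      qed
      then have "?E4 = 0" by (simp add: Ex_const)
      then have "\<bar>C q s i j k l\<bar> \<le> (ie i k + ie i l + ie j k + ie j l) * (p q * p s)"
        using abs_le ppov by simp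
      then show ?thesis unfolding Bd_def using qs B1 eps_nonneg[of q s] by simp
    next
      case qs: True
      show ?thesis
      proof (cases "(i = k \<and> j = l) \<or> (i = l \<and> j = k)")
        case tw: True
        have "?E4 = Ex (\<lambda>z. ind z i q * ind z j q)"
        proof (rule Ex_cong)
          fix z show "ind z i q * ind z j q * ind z k s * ind z l s = ind z i q * ind z j q"
            using tw qs by (auto simp: ind_def)
        qed
        then have "?E4 = p q" using ind2[OF assms(1,2,5,7)] by simp
        moreover have "p q \<le> (ie i k * ie j l + ie i l * ie j k) * p q"
        proof -
          have "1 \<le> ie i k * ie j l + ie i l * ie j k" using tw by (auto simp: ie_def)
          then show ?thesis using p_nonneg[of q] by (simp add: mult_le_cancel_right1)
        qed
        ultimately have "\<bar>C q s i j k l\<bar> \<le> (ie i k * ie j l + ie i l * ie j k) * p q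
                + (ie i k + ie i l + ie j k + ie j l) * (p q * p s)"
          using abs_le ppov by linarith
        moreover have "(ie i k + ie i l + ie j k + ie j l) * (p q * p s) \<le>
             (ie i k + ie i l + ie j k + ie j l) * (p q * p s + (if q = s then (real (m q) / real n) ^ 3 else 0))"
          using qs by (intro mult_left_mono) (auto simp: ie_nonneg)
        ultimately show ?thesis unfolding Bd_def using qs eps_nonneg[of q s] by simp
      next
        case ntw: False
        have "?E4 \<le> (real (m q) / real n) ^ 3"
          using E4_triple[OF assms(1-7) False] ntw qs by auto
        moreover have "(real (m q) / real n) ^ 3 \<le> (ie i k + ie i l + ie j k + ie j l) * (real (m q) / real n) ^ 3"
          using mult_right_mono[OF ov, of "(real (m q) / real n) ^ 3"] by simp
        ultimately have "\<bar>C q s i j k l\<bar> \<le> (ie i k + ie i l + ie j k + ie j l) * (p q * p s + (real (m q) / real n) ^ 3)"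
          using abs_le ppov by (simp add: algebra_simps)
        moreover have "0 \<le> (ie i k * ie j l + ie i l * ie j k) * p q" by (simp add: ie_nonneg p_nonneg)
        ultimately show ?thesis unfolding Bd_def using qs eps_nonneg[of q s] by simp
      qed
    qed
  qed
qed

end


lemma O_bound:
  fixes f g :: "nat \<Rightarrow> nat \<Rightarrow> real" and x y :: "nat \<Rightarrow> real"
  assumes f: "\<And>a b. 0 \<le> f a b \<and> f a b \<le> x a + x b" and g: "\<And>a b. 0 \<le> g a b \<and> g a b \<le> y a + y b"
    and x: "\<And>a. 0 \<le> x a" and y: "\<And>a. 0 \<le> y a"
  shows "(\<Sum>a<n. \<Sum>b<n. \<Sum>c<n. f a b * g a c)
     \<le> real n ^ 2 * (\<Sum>a<n. x a * y a) + 3 * real n * (\<Sum>a<n. x a) * (\<Sum>a<n. y a)"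
proof -
  have "(\<Sum>a<n. \<Sum>b<n. \<Sum>c<n. f a b * g a c) \<le> (\<Sum>a<n. \<Sum>b<n. \<Sum>c<n. (x a + x b) * (y a + y c))"
    using f g by (intro sum_mono mult_mono) (auto intro: add_nonneg_nonneg x y)
  also have "\<dots> = (\<Sum>a<n. (\<Sum>b<n. x a + x b) * (\<Sum>c<n. y a + y c))"
    by (simp add: sum_product)
  also have "\<dots> = (\<Sum>a<n. (real n * x a + (\<Sum>b<n. x b)) * (real n * y a + (\<Sum>c<n. y c)))"
    by (simp add: sum.distrib)
  also have "\<dots> = (\<Sum>a<n. (real n ^ 2) * (x a * y a) + (real n * (\<Sum>c<n. y c)) * x a
        + (real n * (\<Sum>b<n. x b)) * y a + (\<Sum>b<n. x b) * (\<Sum>c<n. y c))"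
    by (intro sum.cong refl) (simp add: algebra_simps power2_eq_square)
  also have "\<dots> = real n ^ 2 * (\<Sum>a<n. x a * y a) + (real n * (\<Sum>c<n. y c)) * (\<Sum>a<n. x a)
        + (real n * (\<Sum>b<n. x b)) * (\<Sum>a<n. y a) + real n * ((\<Sum>b<n. x b) * (\<Sum>c<n. y c))"
    by (simp only: sum.distrib sum_distrib_left[symmetric] sum_constant card_lessThan) (simp add: mult.commute)
  also have "\<dots> = real n ^ 2 * (\<Sum>a<n. x a * y a) + 3 * real n * (\<Sum>a<n. x a) * (\<Sum>a<n. y a)"
    by (simp add: algebra_simps)
  finally show ?thesis .
qed

context design
begin

lemma sum_ie_r: assumes "i < n" shows "(\<Sum>k<n. F k * ie i k) = F i"
proof -
  have "(\<Sum>k<n. F k * ie i k) = (\<Sum>k<n. if i = k then F k else 0)"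
    by (intro sum.cong) (auto simp: ie_def)
  also have "\<dots> = F i" using assms by (simp add: sum.delta')
  finally show ?thesis .
qed
lemma sum_ie_l: assumes "i < n" shows "(\<Sum>k<n. F k * ie k i) = F i"
proof -
  have "(\<Sum>k<n. F k * ie k i) = (\<Sum>k<n. if k = i then F k else 0)"
    by (intro sum.cong) (auto simp: ie_def)
  also have "\<dots> = F i" using assms by (simp add: sum.delta)
  finally show ?thesis .
qed

lemma d_le: "d q i j \<le> (e q i)^2 + (e q j)^2"
proof -
  have "(e q i - e q j)^2 \<le> 2 * ((e q i)^2 + (e q j)^2)"
  proof -
    have "0 \<le> (e q i + e q j)^2" by simp
    then show ?thesis by (simp add: power2_diff power2_sum algebra_simps)
  qed
  then show ?thesis by (simp add: d_def)
qed

lemma sum_ie_r2: "i < n \<Longrightarrow> (\<Sum>k<n. \<Sum>l<n. H2 k l * ie i k) = (\<Sum>l<n. H2 i l)"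
  by (simp add: sum_distrib_right[symmetric] sum_ie_r)

definition U :: "(nat \<Rightarrow> nat) \<Rightarrow> nat \<Rightarrow> real" where
  "U z q = (\<Sum>i<n. \<Sum>j<n. (ind z i q * ind z j q - p q) * d q i j)"

definition Ov :: "nat \<Rightarrow> nat \<Rightarrow> real" where
  "Ov q s = (\<Sum>a<n. \<Sum>b<n. \<Sum>c<n. d q a b * d s a c)"

lemma S_ik: "(\<Sum>i<n. \<Sum>j<n. \<Sum>k<n. \<Sum>l<n. d q i j * d s k l * ie i k) = Ov q s"
  unfolding Ov_def apply (rule sum.cong[OF refl]) apply (rule sum.cong[OF refl]) by (simp add: sum_ie_r2)

lemma S_il: "(\<Sum>i<n. \<Sum>j<n. \<Sum>k<n. \<Sum>l<n. d q i j * d s k l * ie i l) = Ov q s"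
  unfolding Ov_def by (intro sum.cong refl) (simp add: sum_ie_r d_sym[of s])

lemma S_jk: "(\<Sum>i<n. \<Sum>j<n. \<Sum>k<n. \<Sum>l<n. d q i j * d s k l * ie j k) = Ov q s"
proof -
  have "(\<Sum>i<n. \<Sum>j<n. \<Sum>k<n. \<Sum>l<n. d q i j * d s k l * ie j k) = (\<Sum>i<n. \<Sum>j<n. \<Sum>l<n. d q i j * d s j l)"
    apply (rule sum.cong[OF refl]) apply (rule sum.cong[OF refl]) by (simp add: sum_ie_r2)
  also have "\<dots> = (\<Sum>j<n. \<Sum>i<n. \<Sum>l<n. d q i j * d s j l)" by (rule sum.swap)
  also have "\<dots> = Ov q s" unfolding Ov_def by (simp add: d_sym[of q])
  finally show ?thesis .
qed

lemma S_jl: "(\<Sum>i<n. \<Sum>j<n. \<Sum>k<n. \<Sum>l<n. d q i j * d s k l * ie j l) = Ov q s"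
proof -
  have "(\<Sum>i<n. \<Sum>j<n. \<Sum>k<n. \<Sum>l<n. d q i j * d s k l * ie j l) = (\<Sum>i<n. \<Sum>j<n. \<Sum>k<n. d q i j * d s k j)"
    by (intro sum.cong refl) (simp add: sum_ie_r)
  also have "\<dots> = (\<Sum>j<n. \<Sum>i<n. \<Sum>k<n. d q i j * d s k j)" by (rule sum.swap)
  also have "\<dots> = Ov q s" unfolding Ov_def by (simp add: d_sym[of q] d_sym[of s])
  finally show ?thesis .
qed

lemma S_tw1: "(\<Sum>i<n. \<Sum>j<n. \<Sum>k<n. \<Sum>l<n. d q i j * d q k l * (ie i k * ie j l)) = (\<Sum>i<n. \<Sum>j<n. (d q i j)^2)"
proof (intro sum.cong refl)
  fix i j assume i: "i \<in> {..<n}" and j: "j \<in> {..<n}"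
  have "(\<Sum>k<n. \<Sum>l<n. d q i j * d q k l * (ie i k * ie j l)) = (\<Sum>k<n. \<Sum>l<n. (d q i j * d q k l * ie i k) * ie j l)"
    by (simp add: mult.assoc)
  also have "\<dots> = (\<Sum>k<n. d q i j * d q k j * ie i k)" using j by (simp add: sum_ie_r)
  also have "\<dots> = (d q i j)^2" using i by (simp add: sum_ie_r power2_eq_square)
  finally show "(\<Sum>k<n. \<Sum>l<n. d q i j * d q k l * (ie i k * ie j l)) = (d q i j)^2" .
qed

lemma S_tw2: "(\<Sum>i<n. \<Sum>j<n. \<Sum>k<n. \<Sum>l<n. d q i j * d q k l * (ie i l * ie j k)) = (\<Sum>i<n. \<Sum>j<n. (d q i j)^2)"
proof (intro sum.cong refl)
  fix i j assume i: "i \<in> {..<n}" and j: "j \<in> {..<n}"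
  have "(\<Sum>k<n. \<Sum>l<n. d q i j * d q k l * (ie i l * ie j k)) = (\<Sum>k<n. \<Sum>l<n. (d q i j * d q k l * ie j k) * ie i l)"
    by (simp add: mult.assoc mult.commute mult.left_commute)
  also have "\<dots> = (\<Sum>k<n. d q i j * d q k i * ie j k)" using i by (simp add: sum_ie_r)
  also have "\<dots> = (d q i j)^2" using j by (simp add: sum_ie_r power2_eq_square d_sym[of q j i])
  finally show "(\<Sum>k<n. \<Sum>l<n. d q i j * d q k l * (ie i l * ie j k)) = (d q i j)^2" .
qed

lemma S_1: "(\<Sum>i<n. \<Sum>j<n. \<Sum>k<n. \<Sum>l<n. d q i j * d s k l) = (\<Sum>i<n. \<Sum>j<n. d q i j) * (\<Sum>k<n. \<Sum>l<n. d s k l)"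
  by (simp only: sum_distrib_right) (simp only: sum_distrib_left)

lemma EUU: assumes "q < Q" "s < Q"
  shows "Ex (\<lambda>z. U z q * U z s) = (\<Sum>i<n. \<Sum>j<n. \<Sum>k<n. \<Sum>l<n. C q s i j k l * (d q i j * d s k l))"
proof -
  have "Ex (\<lambda>z. U z q * U z s) = Ex (\<lambda>z. \<Sum>i<n. \<Sum>j<n. \<Sum>k<n. \<Sum>l<n.
      ((ind z i q * ind z j q - p q) * (ind z k s * ind z l s - p s)) * (d q i j * d s k l))"
  proof (rule Ex_cong)
    fix z
    have "U z q * U z s = (\<Sum>i<n. \<Sum>j<n. \<Sum>k<n. \<Sum>l<n.
      ((ind z i q * ind z j q - p q) * d q i j) * ((ind z k s * ind z l s - p s) * d s k l))"
      unfolding U_def by (simp only: sum_distrib_right) (simp only: sum_distrib_left)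
    also have "\<dots> = (\<Sum>i<n. \<Sum>j<n. \<Sum>k<n. \<Sum>l<n.
      ((ind z i q * ind z j q - p q) * (ind z k s * ind z l s - p s)) * (d q i j * d s k l))"
      by (intro sum.cong refl) (simp only: mult_ac)
    finally show "U z q * U z s = (\<Sum>i<n. \<Sum>j<n. \<Sum>k<n. \<Sum>l<n.
      ((ind z i q * ind z j q - p q) * (ind z k s * ind z l s - p s)) * (d q i j * d s k l))" .
  qed
  also have "\<dots> = (\<Sum>i<n. \<Sum>j<n. \<Sum>k<n. \<Sum>l<n. C q s i j k l * (d q i j * d s k l))"
    by (simp add: Ex_sum Ex_multc C_def)
  finally show ?thesis .
qed

end


context design
begin

context
  fixes D4 :: real
  assumes mom: "\<And>q. q < Q \<Longrightarrow> (\<Sum>i<n. (e q i)^4) \<le> real n * D4"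
begin

lemma D4_nonneg: "0 \<le> D4"
proof -
  have "0 \<le> (\<Sum>i<n. (e 0 i)^4)" by (simp add: sum_nonneg)
  also have "\<dots> \<le> real n * D4" using mom[of 0] Qpos by simp
  finally show ?thesis using n_ge2 by (simp add: zero_le_mult_iff)
qed

lemma sumsq_bound: assumes "q < Q" shows "(\<Sum>i<n. (e q i)^2)^2 \<le> real n ^ 2 * D4"
proof -
  have "(\<Sum>i<n. (e q i)^2)^2 \<le> (\<Sum>i<n. ((e q i)^2)^2) * card {..<n}"
    by (rule sum_squared_le_sum_of_squares)
  also have "\<dots> = (\<Sum>i<n. (e q i)^4) * real n" by (simp add: power2_eq_square power4_eq_xxxx mult.assoc)
  also have "\<dots> \<le> real n * D4 * real n" using mom[OF assms] by (simp add: mult_right_mono)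
  finally show ?thesis by (simp add: power2_eq_square mult_ac)
qed

lemma prod_bound: assumes "q < Q" "s < Q"
  shows "(\<Sum>i<n. (e q i)^2) * (\<Sum>i<n. (e s i)^2) \<le> real n ^ 2 * D4"
proof -
  let ?A = "\<Sum>i<n. (e q i)^2" and ?B = "\<Sum>i<n. (e s i)^2"
  have "?A * ?B \<le> (?A^2 + ?B^2) / 2"
  proof -
    have "0 \<le> (?A - ?B)^2" by simp
    then show ?thesis by (simp add: power2_diff algebra_simps)
  qed
  also have "\<dots> \<le> (real n ^ 2 * D4 + real n ^ 2 * D4) / 2"
    using sumsq_bound[OF assms(1)] sumsq_bound[OF assms(2)] by (intro divide_right_mono add_mono) auto
  finally show ?thesis by (simp add: mult.commute)
qed

lemma cross_bound: assumes "q < Q" "s < Q"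
  shows "(\<Sum>i<n. (e q i)^2 * (e s i)^2) \<le> real n * D4"
proof -
  have "(\<Sum>i<n. (e q i)^2 * (e s i)^2) \<le> (\<Sum>i<n. ((e q i)^4 + (e s i)^4) / 2)"
  proof (rule sum_mono)
    fix i
    have "0 \<le> ((e q i)^2 - (e s i)^2)^2" by simp
    then show "(e q i)^2 * (e s i)^2 \<le> ((e q i)^4 + (e s i)^4) / 2"
      by (simp add: power2_diff algebra_simps power4_eq_xxxx power2_eq_square)
  qed
  also have "\<dots> = ((\<Sum>i<n. (e q i)^4) + (\<Sum>i<n. (e s i)^4)) / 2"
    by (simp add: sum.distrib sum_divide_distrib[symmetric])
  also have "\<dots> \<le> (real n * D4 + real n * D4) / 2"
    using mom[OF assms(1)] mom[OF assms(2)] by (intro divide_right_mono add_mono) auto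
  finally show ?thesis by (simp add: mult.commute)
qed

lemma S1_bound: assumes "q < Q" "s < Q"
  shows "(\<Sum>i<n. \<Sum>j<n. d q i j) * (\<Sum>k<n. \<Sum>l<n. d s k l) \<le> real n ^ 4 * D4"
proof -
  have "(\<Sum>i<n. \<Sum>j<n. d q i j) * (\<Sum>k<n. \<Sum>l<n. d s k l)
      = real n ^ 2 * ((\<Sum>i<n. (e q i)^2) * (\<Sum>i<n. (e s i)^2))"
    by (simp add: sum_d power2_eq_square mult_ac)
  also have "\<dots> \<le> real n ^ 2 * (real n ^ 2 * D4)"
    by (intro mult_left_mono prod_bound assms) simp
  finally show ?thesis by (simp add: power_add[symmetric] mult.assoc[symmetric] numeral_Bit0)
qed

lemma Ov_bound: assumes "q < Q" "s < Q"
  shows "Ov q s \<le> 4 * real n ^ 3 * D4"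
proof -
  have "Ov q s \<le> real n ^ 2 * (\<Sum>a<n. (e q a)^2 * (e s a)^2) + 3 * real n * (\<Sum>a<n. (e q a)^2) * (\<Sum>a<n. (e s a)^2)"
    unfolding Ov_def by (rule O_bound) (auto simp: d_nonneg d_le)
  also have "\<dots> \<le> real n ^ 2 * (real n * D4) + 3 * real n * (real n ^ 2 * D4)"
  proof -
    have "3 * real n * (\<Sum>a<n. (e q a)^2) * (\<Sum>a<n. (e s a)^2) = 3 * real n * ((\<Sum>a<n. (e q a)^2) * (\<Sum>a<n. (e s a)^2))"
      by (simp add: mult.assoc)
    also have "\<dots> \<le> 3 * real n * (real n ^ 2 * D4)"
      by (intro mult_left_mono prod_bound assms) simp
    finally show ?thesis
      using cross_bound[OF assms] by (intro add_mono mult_left_mono) auto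
  qed
  also have "\<dots> = 4 * real n ^ 3 * D4" by (simp add: power2_eq_square power3_eq_cube algebra_simps)
  finally show ?thesis .
qed

lemma R_bound: assumes "q < Q"
  shows "(\<Sum>i<n. \<Sum>j<n. (d q i j)^2) \<le> 4 * real n ^ 2 * D4"
proof -
  let ?x = "\<lambda>a. (e q a)^2"
  have "(\<Sum>i<n. \<Sum>j<n. (d q i j)^2) \<le> (\<Sum>i<n. \<Sum>j<n. 2 * (?x i)^2 + 2 * (?x j)^2)"
  proof (intro sum_mono)
    fix i j
    have "(d q i j)^2 \<le> (?x i + ?x j)^2"
      using d_le[of q i j] d_nonneg[of q i j] by (intro power_mono) auto
    also have "\<dots> \<le> 2 * (?x i)^2 + 2 * (?x j)^2"
    proof -
      have "0 \<le> (?x i - ?x j)^2" by simp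
      then show ?thesis by (simp add: power2_diff power2_sum algebra_simps)
    qed
    finally show "(d q i j)^2 \<le> 2 * (?x i)^2 + 2 * (?x j)^2" .
  qed
  also have "\<dots> = 4 * real n * (\<Sum>i<n. (?x i)^2)"
    by (simp add: sum.distrib sum_distrib_left[symmetric] algebra_simps)
  also have "\<dots> = 4 * real n * (\<Sum>i<n. (e q i)^4)" by (simp add: power4_eq_xxxx power2_eq_square mult_ac)
  also have "\<dots> \<le> 4 * real n * (real n * D4)" using mom[OF assms] by (intro mult_left_mono) auto
  finally show ?thesis by (simp add: power2_eq_square mult_ac)
qed

definition Bqs :: "nat \<Rightarrow> nat \<Rightarrow> real" where
  "Bqs q s = D4 * (real n ^ 4 * eps q s + 16 * real n ^ 3 * (p q * p s + (if q = s then (real (m q) / real n) ^ 3 else 0))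
       + (if q = s then 8 * real n ^ 2 * p q else 0))"

lemma pair_bound: assumes q: "q < Q" and s: "s < Q"
  shows "\<bar>Ex (\<lambda>z. U z q * U z s)\<bar> \<le> Bqs q s"
proof -
  define K where "K = p q * p s + (if q = s then (real (m q) / real n) ^ 3 else 0)"
  define T where "T = (if q = s then p q else 0)"
  have K0: "0 \<le> K" by (simp add: K_def p_nonneg)
  have T0: "0 \<le> T" by (simp add: T_def p_nonneg)
  have "\<bar>Ex (\<lambda>z. U z q * U z s)\<bar> \<le> (\<Sum>i<n. \<Sum>j<n. \<Sum>k<n. \<Sum>l<n. \<bar>C q s i j k l * (d q i j * d s k l)\<bar>)"
    unfolding EUU[OF q s] by (rule order.trans[OF sum_abs] sum_mono)+ (rule order.refl)
  also have "\<dots> \<le> (\<Sum>i<n. \<Sum>j<n. \<Sum>k<n. \<Sum>l<n. d q i j * d s k l * Bd q s i j k l)"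
  proof (intro sum_mono)
    fix i j k l assume i: "i \<in> {..<n}" and j: "j \<in> {..<n}" and k: "k \<in> {..<n}" and l: "l \<in> {..<n}"
    have dd: "0 \<le> d q i j * d s k l" by (simp add: d_nonneg)
    show "\<bar>C q s i j k l * (d q i j * d s k l)\<bar> \<le> d q i j * d s k l * Bd q s i j k l"
    proof (cases "i = j \<or> k = l")
      case True then show ?thesis by (auto simp: d_diag)
    next
      case False
      then have "\<bar>C q s i j k l\<bar> \<le> Bd q s i j k l" using i j k l q s by (intro C_bound) auto
      then have "\<bar>C q s i j k l\<bar> * (d q i j * d s k l) \<le> Bd q s i j k l * (d q i j * d s k l)"
        using dd by (rule mult_right_mono)
      then show ?thesis using dd by (simp add: abs_mult mult.commute abs_of_nonneg d_nonneg)
    qed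
  qed
  also have "\<dots> = (\<Sum>i<n. \<Sum>j<n. \<Sum>k<n. \<Sum>l<n. eps q s * (d q i j * d s k l)
        + K * (d q i j * d s k l * ie i k) + K * (d q i j * d s k l * ie i l)
        + K * (d q i j * d s k l * ie j k) + K * (d q i j * d s k l * ie j l)
        + T * (d q i j * d s k l * (ie i k * ie j l)) + T * (d q i j * d s k l * (ie i l * ie j k)))"
    by (intro sum.cong refl) (simp add: Bd_def K_def T_def algebra_simps)
  also have "\<dots> = eps q s * (\<Sum>i<n. \<Sum>j<n. \<Sum>k<n. \<Sum>l<n. d q i j * d s k l)
        + K * (\<Sum>i<n. \<Sum>j<n. \<Sum>k<n. \<Sum>l<n. d q i j * d s k l * ie i k)
        + K * (\<Sum>i<n. \<Sum>j<n. \<Sum>k<n. \<Sum>l<n. d q i j * d s k l * ie i l)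
        + K * (\<Sum>i<n. \<Sum>j<n. \<Sum>k<n. \<Sum>l<n. d q i j * d s k l * ie j k)
        + K * (\<Sum>i<n. \<Sum>j<n. \<Sum>k<n. \<Sum>l<n. d q i j * d s k l * ie j l)
        + T * (\<Sum>i<n. \<Sum>j<n. \<Sum>k<n. \<Sum>l<n. d q i j * d s k l * (ie i k * ie j l))
        + T * (\<Sum>i<n. \<Sum>j<n. \<Sum>k<n. \<Sum>l<n. d q i j * d s k l * (ie i l * ie j k))"
    by (simp only: sum.distrib sum_distrib_left[symmetric])
  also have "\<dots> = eps q s * ((\<Sum>i<n. \<Sum>j<n. d q i j) * (\<Sum>k<n. \<Sum>l<n. d s k l)) + K * (4 * Ov q s)
        + T * (2 * (\<Sum>i<n. \<Sum>j<n. (d q i j)^2))"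
  proof -
    have t1: "T * (\<Sum>i<n. \<Sum>j<n. \<Sum>k<n. \<Sum>l<n. d q i j * d s k l * (ie i k * ie j l))
        = T * (\<Sum>i<n. \<Sum>j<n. (d q i j)^2)"
      by (cases "q = s") (simp_all add: T_def S_tw1)
    have t2: "T * (\<Sum>i<n. \<Sum>j<n. \<Sum>k<n. \<Sum>l<n. d q i j * d s k l * (ie i l * ie j k))
        = T * (\<Sum>i<n. \<Sum>j<n. (d q i j)^2)"
      by (cases "q = s") (simp_all add: T_def S_tw2)
    show ?thesis by (simp only: S_1 S_ik S_il S_jk S_jl t1 t2)
  qed
  also have "\<dots> \<le> eps q s * (real n ^ 4 * D4) + K * (4 * (4 * real n ^ 3 * D4)) + T * (2 * (4 * real n ^ 2 * D4))"
    using S1_bound[OF q s] Ov_bound[OF q s] R_bound[OF q] K0 T0 eps_nonneg[of q s]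
    by (intro add_mono mult_left_mono) auto
  also have "\<dots> = Bqs q s"
    by (simp add: Bqs_def K_def T_def algebra_simps)
  finally show ?thesis .
qed

end
end


lemma ratio2: "(2::real) \<le> N \<Longrightarrow> N / (N - 1) \<le> 2"
  by (simp add: divide_simps)

lemma arith1:
  fixes N D S :: real assumes N: "0 < N" and D: "0 < D" and ND: "N / D \<le> 2"
  shows "48 * N ^ 3 * (S / (N * D))^2 \<le> 192 * S^2 / N"
proof -
  have "48 * N ^ 3 * (S / (N * D))^2 = (48 * (N / D)^2) * (S^2 / N)"
    using N D by (simp add: field_simps power2_eq_square power3_eq_cube)
  also have "\<dots> \<le> (48 * 2^2) * (S^2 / N)"
    using N D ND by (intro mult_right_mono mult_left_mono power_mono) auto
  finally show ?thesis by simp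
qed

lemma arith2:
  fixes M N a D E :: real assumes M: "0 < M" and N: "0 < N" and D: "0 < D" and E: "0 < E"
    and r1: "N / D \<le> 2" "M / E \<le> 2" and r2: "1 / E \<le> 1"
  shows "(a / (M * (M * E)))^2 * (32 * N^4 * (M * E / (N * D))^2 / M
          + 16 * N^3 * (M / N)^3 + 8 * N^2 * (M * E / (N * D))) \<le> 208 * a^2 / M^3"
proof -
  have e: "(a / (M * (M * E)))^2 * (32 * N^4 * (M * E / (N * D))^2 / M
          + 16 * N^3 * (M / N)^3 + 8 * N^2 * (M * E / (N * D)))
      = (a^2 / M^3) * (32 * (N / D)^2 + 16 * (M / E)^2 + 8 * (N / D) * (1 / E))"
    using M N D E by (simp add: field_simps power2_eq_square power3_eq_cube power4_eq_xxxx)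
  have "32 * (N / D)^2 + 16 * (M / E)^2 + 8 * (N / D) * (1 / E) \<le> 32 * 2^2 + 16 * 2^2 + 8 * 2 * 1"
  proof -
    have r0: "0 \<le> N / D" "0 \<le> M / E" "0 \<le> 1 / E" using M N D E by auto
    have "(N / D)^2 \<le> 2^2" "(M / E)^2 \<le> 2^2" using r1 r0 by (intro power_mono; simp)+
    moreover have "(N / D) * (1 / E) \<le> 2 * 1" using r1 r0 r2 by (intro mult_mono) auto
    ultimately show ?thesis by linarith
  qed
  then have "(a^2 / M^3) * (32 * (N / D)^2 + 16 * (M / E)^2 + 8 * (N / D) * (1 / E)) \<le> (a^2 / M^3) * 208"
    using M by (intro mult_left_mono) auto
  then show ?thesis unfolding e by (simp add: mult.commute)
qed

context design
begin

definition w :: "(nat \<Rightarrow> real) \<Rightarrow> nat \<Rightarrow> real" where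
  "w a q = a q / (real (m q) * (real (m q) * (real (m q) - 1)))"

lemma Spop_p: assumes q: "q < Q"
  shows "Spop n Y q q = (\<Sum>i<n. \<Sum>j<n. p q * d q i j) / (real (m q) * (real (m q) - 1))"
proof -
  have m2: "2 \<le> m q" using msize q by simp
  have "(\<Sum>i<n. \<Sum>j<n. p q * d q i j) / (real (m q) * (real (m q) - 1))
      = p q * (\<Sum>i<n. \<Sum>j<n. d q i j) / (real (m q) * (real (m q) - 1))"
    by (simp add: sum_distrib_left)
  also have "\<dots> = (\<Sum>i<n. \<Sum>j<n. d q i j) / (real n * (real n - 1))"
  proof -
    have g: "\<And>a b X :: real. a \<noteq> 0 \<Longrightarrow> (a / b) * X / a = X / b" by simp
    show ?thesis unfolding p_eq[OF q] by (rule g) (use m2 in simp)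
  qed
  also have "\<dots> = Spop n Y q q" by (simp add: Spop_d)
  finally show ?thesis by simp
qed

lemma X_eq: assumes z: "z \<in> A"
  shows "(\<Sum>q<Q. a q * (Shat n m Y z q - Spop n Y q q) / real (m q)) = (\<Sum>q<Q. w a q * U z q)"
proof (rule sum.cong[OF refl])
  fix q assume "q \<in> {..<Q}"
  then have q: "q < Q" by simp
  have m2: "2 \<le> m q" using msize q by simp
  have "Shat n m Y z q - Spop n Y q q
      = ((\<Sum>i<n. \<Sum>j<n. ind z i q * ind z j q * d q i j) - (\<Sum>i<n. \<Sum>j<n. p q * d q i j)) / (real (m q) * (real (m q) - 1))"
    unfolding shat_eq[OF z q] Spop_p[OF q] by (simp add: diff_divide_distrib)
  also have "\<dots> = U z q / (real (m q) * (real (m q) - 1))"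
    unfolding U_def by (simp add: sum_subtractf[symmetric] algebra_simps)
  finally have eq: "Shat n m Y z q - Spop n Y q q = U z q / (real (m q) * (real (m q) - 1))" .
  have nz: "real (m q) \<noteq> 0" "real (m q) - 1 \<noteq> 0" using m2 by auto
  have "a q * (Shat n m Y z q - Spop n Y q q) / real (m q) = a q * (U z q / (real (m q) * (real (m q) - 1))) / real (m q)"
    by (simp only: eq)
  also have "\<dots> = w a q * U z q" unfolding w_def using nz by (simp add: field_simps)
  finally show "a q * (Shat n m Y z q - Spop n Y q q) / real (m q) = w a q * U z q" .
qed

context
  fixes D4 :: real
  assumes mom: "\<And>q. q < Q \<Longrightarrow> (\<Sum>i<n. (e q i)^4) \<le> real n * D4"
begin

lemma var_bound1:
  "Ex (\<lambda>z. (\<Sum>q<Q. a q * (Shat n m Y z q - Spop n Y q q) / real (m q))^2)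
     \<le> (\<Sum>q<Q. \<Sum>s<Q. \<bar>w a q\<bar> * \<bar>w a s\<bar> * Bqs D4 q s)"
proof -
  have "Ex (\<lambda>z. (\<Sum>q<Q. a q * (Shat n m Y z q - Spop n Y q q) / real (m q))^2)
      = Ex (\<lambda>z. \<Sum>q<Q. \<Sum>s<Q. w a q * w a s * (U z q * U z s))"
  proof (rule Ex_cong)
    fix z assume z: "z \<in> A"
    show "(\<Sum>q<Q. a q * (Shat n m Y z q - Spop n Y q q) / real (m q))^2 = (\<Sum>q<Q. \<Sum>s<Q. w a q * w a s * (U z q * U z s))"
      unfolding X_eq[OF z] power2_eq_square sum_product by (simp add: mult_ac)
  qed
  also have "\<dots> = (\<Sum>q<Q. \<Sum>s<Q. w a q * w a s * Ex (\<lambda>z. U z q * U z s))"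
    by (simp add: Ex_sum Ex_cmult)
  also have "\<dots> \<le> (\<Sum>q<Q. \<Sum>s<Q. \<bar>w a q\<bar> * \<bar>w a s\<bar> * Bqs D4 q s)"
  proof (intro sum_mono)
    fix q s assume "q \<in> {..<Q}" "s \<in> {..<Q}"
    then have qs: "q < Q" "s < Q" by auto
    have "w a q * w a s * Ex (\<lambda>z. U z q * U z s) \<le> \<bar>w a q * w a s * Ex (\<lambda>z. U z q * U z s)\<bar>" by simp
    also have "\<dots> = \<bar>w a q\<bar> * \<bar>w a s\<bar> * \<bar>Ex (\<lambda>z. U z q * U z s)\<bar>" by (simp add: abs_mult)
    also have "\<dots> \<le> \<bar>w a q\<bar> * \<bar>w a s\<bar> * Bqs D4 q s"
      using pair_bound[OF mom qs] by (intro mult_left_mono) auto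
    finally show "w a q * w a s * Ex (\<lambda>z. U z q * U z s) \<le> \<bar>w a q\<bar> * \<bar>w a s\<bar> * Bqs D4 q s" .
  qed
  finally show ?thesis .
qed

lemma var_bound:
  "Ex (\<lambda>z. (\<Sum>q<Q. a q * (Shat n m Y z q - Spop n Y q q) / real (m q))^2)
     \<le> D4 * (192 * (\<Sum>q<Q. \<bar>a q\<bar> / real (m q))^2 / real n + 208 * (\<Sum>q<Q. (a q)^2 / real (m q) ^ 3))"
proof -
  have D0: "0 \<le> D4" by (rule D4_nonneg[OF mom])
  define diag where "diag q = 32 * real n ^ 4 * (p q)^2 / real (m q) + 16 * real n ^ 3 * (real (m q) / real n) ^ 3
      + 8 * real n ^ 2 * p q" for q
  have Bqs_eq: "Bqs D4 q s = D4 * (real n ^ 4 * eps q s + 16 * real n ^ 3 * (p q * p s + (if q = s then (real (m q) / real n) ^ 3 else 0))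
       + (if q = s then 8 * real n ^ 2 * p q else 0))" for q s
    by (rule Bqs_def) (rule mom)
  have B: "Bqs D4 q s = D4 * (48 * real n ^ 3 * (p q * p s)) + (if q = s then D4 * diag q else 0)" for q s
    unfolding Bqs_eq eps_def diag_def using n_ge2
    by (cases "q = s") (simp_all add: algebra_simps power2_eq_square power3_eq_cube power4_eq_xxxx)
  have "(\<Sum>q<Q. \<Sum>s<Q. \<bar>w a q\<bar> * \<bar>w a s\<bar> * Bqs D4 q s)
      = D4 * (48 * real n ^ 3 * (\<Sum>q<Q. \<bar>w a q\<bar> * p q)^2) + D4 * (\<Sum>q<Q. (w a q)^2 * diag q)"
  proof -
    have "(\<Sum>q<Q. \<Sum>s<Q. \<bar>w a q\<bar> * \<bar>w a s\<bar> * Bqs D4 q s)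
      = (\<Sum>q<Q. \<Sum>s<Q. D4 * (48 * real n ^ 3) * ((\<bar>w a q\<bar> * p q) * (\<bar>w a s\<bar> * p s))
          + (if q = s then D4 * ((w a q)^2 * diag q) else 0))"
      unfolding B by (intro sum.cong refl) (auto simp: algebra_simps power2_eq_square)
    also have "\<dots> = D4 * (48 * real n ^ 3) * (\<Sum>q<Q. \<Sum>s<Q. (\<bar>w a q\<bar> * p q) * (\<bar>w a s\<bar> * p s))
          + (\<Sum>q<Q. D4 * ((w a q)^2 * diag q))"
      by (simp add: sum.distrib sum_distrib_left[symmetric] sum.delta)
    also have "\<dots> = D4 * (48 * real n ^ 3 * (\<Sum>q<Q. \<bar>w a q\<bar> * p q)^2) + D4 * (\<Sum>q<Q. (w a q)^2 * diag q)"
      by (simp add: power2_eq_square sum_product sum_distrib_left[symmetric] mult_ac)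
    finally show ?thesis .
  qed
  also have "\<dots> \<le> D4 * (192 * (\<Sum>q<Q. \<bar>a q\<bar> / real (m q))^2 / real n) + D4 * (208 * (\<Sum>q<Q. (a q)^2 / real (m q) ^ 3))"
  proof (intro add_mono mult_left_mono D0)
    have wp: "\<bar>w a q\<bar> * p q = (\<bar>a q\<bar> / real (m q)) / (real n * (real n - 1))" if "q < Q" for q
    proof -
      have m2: "2 \<le> m q" using msize that by simp
      have pos: "0 < real (m q) * (real (m q) * (real (m q) - 1))" using m2 by simp
      have nz: "real (m q) \<noteq> 0" "real (m q) - 1 \<noteq> 0" "real n \<noteq> 0" "real n - 1 \<noteq> 0" using m2 n_ge2 by auto
      have "\<bar>w a q\<bar> = \<bar>a q\<bar> / (real (m q) * (real (m q) * (real (m q) - 1)))"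
        unfolding w_def using pos by (simp add: abs_divide)
      then show ?thesis unfolding p_eq[OF that] using nz by (simp add: field_simps)
    qed
    have "(\<Sum>q<Q. \<bar>w a q\<bar> * p q) = (\<Sum>q<Q. \<bar>a q\<bar> / real (m q)) / (real n * (real n - 1))"
      by (simp add: wp sum_divide_distrib)
    then show "48 * real n ^ 3 * (\<Sum>q<Q. \<bar>w a q\<bar> * p q)^2 \<le> 192 * (\<Sum>q<Q. \<bar>a q\<bar> / real (m q))^2 / real n"
      using arith1[of "real n" "real n - 1"] n_ge2 ratio2[of "real n"] by simp
  next
    show "(\<Sum>q<Q. (w a q)^2 * diag q) \<le> 208 * (\<Sum>q<Q. (a q)^2 / real (m q) ^ 3)"
      unfolding sum_distrib_left
    proof (intro sum_mono)
      fix q assume "q \<in> {..<Q}"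
      then have q: "q < Q" by simp
      have m2: "2 \<le> real (m q)" using msize q by simp
      have n2: "2 \<le> real n" using n_ge2 by simp
      show "(w a q)^2 * diag q \<le> 208 * ((a q)^2 / real (m q) ^ 3)"
        using arith2[of "real (m q)" "real n" "real n - 1" "real (m q) - 1" "a q"] m2 n2 ratio2[OF m2] ratio2[OF n2]
        unfolding w_def diag_def p_eq[OF q] by simp
    qed
  qed
  finally have "(\<Sum>q<Q. \<Sum>s<Q. \<bar>w a q\<bar> * \<bar>w a s\<bar> * Bqs D4 q s) \<le>
     D4 * (192 * (\<Sum>q<Q. \<bar>a q\<bar> / real (m q))^2 / real n) + D4 * (208 * (\<Sum>q<Q. (a q)^2 / real (m q) ^ 3))" .
  from order.trans[OF var_bound1 this] show ?thesis by (simp add: distrib_left)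
qed

end
end


lemma max_norm_entry:
  assumes "i < a" "j < b"
  shows "\<bar>A i j\<bar> \<le> max_norm a b A"
proof -
  have fin: "finite {\<bar>A i j\<bar> | i j. i < a \<and> j < b}"
  proof -
    have "{\<bar>A i j\<bar> | i j. i < a \<and> j < b} = (\<lambda>(i,j). \<bar>A i j\<bar>) ` ({..<a} \<times> {..<b})" by auto
    then show ?thesis by simp
  qed
  show ?thesis unfolding max_norm_def using fin assms by (intro Max_ge) auto
qed

lemma max_norm_sq_le:
  "(max_norm a b A)^2 \<le> (\<Sum>i<a. \<Sum>j<b. (A i j)^2)"
proof -
  have fin: "finite {\<bar>A i j\<bar> | i j. i < a \<and> j < b}"
  proof -
    have "{\<bar>A i j\<bar> | i j. i < a \<and> j < b} = (\<lambda>(i,j). \<bar>A i j\<bar>) ` ({..<a} \<times> {..<b})" by auto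
    then show ?thesis by simp
  qed
  have "max_norm a b A \<in> insert 0 {\<bar>A i j\<bar> | i j. i < a \<and> j < b}"
    unfolding max_norm_def using fin by (intro Max_in) auto
  then consider "max_norm a b A = 0" | i j where "i < a" "j < b" "max_norm a b A = \<bar>A i j\<bar>" by auto
  then show ?thesis
  proof cases
    case 1 then show ?thesis by (simp add: sum_nonneg)
  next
    case (2 i j)
    have "(A i j)^2 \<le> (\<Sum>j'<b. (A i j')^2)"
      using 2 by (intro member_le_sum[where f = "\<lambda>j'. (A i j')^2"]) auto
    also have "\<dots> \<le> (\<Sum>i'<a. \<Sum>j'<b. (A i' j')^2)"
      using 2 by (intro member_le_sum[where f = "\<lambda>i'. \<Sum>j'<b. (A i' j')^2"]) (auto intro: sum_nonneg)
    finally show ?thesis using 2 by simp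
  qed
qed

lemma op_norm_sq_le:
  "(op_norm a b A)^2 \<le> (\<Sum>i<a. \<Sum>j<b. (A i j)^2)"
proof -
  let ?S = "{sqrt (\<Sum>i<a. (\<Sum>j<b. A i j * x j)^2) | x. (\<Sum>j<b. (x j)^2) \<le> 1}"
  let ?F = "\<Sum>i<a. \<Sum>j<b. (A i j)^2"
  have F0: "0 \<le> ?F" by (intro sum_nonneg) auto
  have ub: "y \<le> sqrt ?F" if yS: "y \<in> ?S" for y
  proof -
    obtain x where x: "(\<Sum>j<b. (x j)^2) \<le> 1" and y: "y = sqrt (\<Sum>i<a. (\<Sum>j<b. A i j * x j)^2)"
      using yS by blast
    have "(\<Sum>i<a. (\<Sum>j<b. A i j * x j)^2) \<le> (\<Sum>i<a. (\<Sum>j<b. (A i j)^2) * (\<Sum>j<b. (x j)^2))"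
      by (intro sum_mono Cauchy_Schwarz_ineq_sum)
    also have "\<dots> \<le> (\<Sum>i<a. (\<Sum>j<b. (A i j)^2) * 1)"
      using x by (intro sum_mono mult_left_mono) (auto intro: sum_nonneg)
    finally show ?thesis unfolding y by simp
  qed
  have ne: "0 \<in> ?S" by (intro CollectI exI[of _ "\<lambda>_. 0"]) simp
  have bdd: "bdd_above ?S" using ub by (intro bdd_aboveI) blast
  have "op_norm a b A \<le> sqrt ?F"
    unfolding op_norm_def using ne ub by (intro cSup_least) auto
  moreover have "0 \<le> op_norm a b A"
    unfolding op_norm_def using ne bdd by (intro cSup_upper2[of 0]) auto
  ultimately have "(op_norm a b A)^2 \<le> (sqrt ?F)^2" by (intro power_mono) auto
  then show ?thesis using F0 by simp
qed

lemma bigO_from_mean: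
  fixes P :: "nat \<Rightarrow> 'a pmf" and S :: "nat \<Rightarrow> 'a set" and X :: "nat \<Rightarrow> 'a \<Rightarrow> real"
  assumes P: "\<And>k. P k = pmf_of_set (S k)" and fin: "\<And>k. finite (S k)" and ne: "\<And>k. S k \<noteq> {}"
    and X0: "\<And>k z. z \<in> S k \<Longrightarrow> 0 \<le> X k z"
    and mean: "\<And>k. (\<Sum>z\<in>S k. X k z) / card (S k) \<le> C * r k"
    and r0: "\<And>k. 0 \<le> r k" and C0: "0 \<le> C"
  shows "bigO_P P X r"
  unfolding bigO_P_def
proof (intro allI impI)
  fix \<epsilon> :: real assume eps: "0 < \<epsilon>"
  define M where "M = 2 * (C + 1) / \<epsilon>"
  have M0: "0 < M" using eps C0 by (simp add: M_def)
  have "measure_pmf.prob (P k) {\<omega>. M * r k < \<bar>X k \<omega>\<bar>} < \<epsilon>" for k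
  proof -
    let ?B = "{\<omega>. M * r k < \<bar>X k \<omega>\<bar>}"
    have cpos: "0 < real (card (S k))" using fin ne by (simp add: card_gt_0_iff)
    have pr: "measure_pmf.prob (P k) ?B = card (S k \<inter> ?B) / card (S k)"
      unfolding P using measure_pmf_of_set[OF ne fin] by simp
    have sumle: "(\<Sum>z\<in>S k. X k z) \<le> C * r k * card (S k)"
      using mean[of k] cpos by (simp add: divide_le_eq)
    show ?thesis
    proof (cases "r k = 0")
      case True
      have "\<forall>z\<in>S k. X k z = 0"
      proof -
        have "(\<Sum>z\<in>S k. X k z) \<le> 0" using sumle True by simp
        moreover have "0 \<le> (\<Sum>z\<in>S k. X k z)" using X0 by (intro sum_nonneg) auto
        ultimately have "(\<Sum>z\<in>S k. X k z) = 0" by simp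
        then show ?thesis using sum_nonneg_eq_0_iff[OF fin[of k]] X0 by blast
      qed
      then have "S k \<inter> ?B = {}" using True by auto
      then show ?thesis using pr eps by simp
    next
      case False
      then have rpos: "0 < r k" using r0[of k] by simp
      have "real (card (S k \<inter> ?B)) * (M * r k) = (\<Sum>z\<in>S k \<inter> ?B. M * r k)" by simp
      also have "\<dots> \<le> (\<Sum>z\<in>S k \<inter> ?B. X k z)"
        using X0 by (intro sum_mono) auto
      also have "\<dots> \<le> (\<Sum>z\<in>S k. X k z)"
        using X0 fin by (intro sum_mono2) auto
      also have "\<dots> \<le> C * r k * card (S k)" by (rule sumle)
      finally have "real (card (S k \<inter> ?B)) * (M * r k) \<le> C * r k * card (S k)" .
      then have "real (card (S k \<inter> ?B)) * M \<le> C * card (S k)"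
        using rpos by (simp add: mult.commute mult.left_commute)
      then have "real (card (S k \<inter> ?B)) / card (S k) \<le> C / M"
        using cpos M0 by (simp add: field_simps)
      also have "C / M < \<epsilon>"
      proof -
        have "C * \<epsilon> < (2 * (C + 1)) * \<epsilon>" using eps C0 by (intro mult_strict_right_mono) auto
        then have "C * \<epsilon> / (2 * (C + 1)) < \<epsilon>" using C0 by (simp add: divide_less_eq mult.commute)
        moreover have "C / M = C * \<epsilon> / (2 * (C + 1))" using eps C0 by (simp add: M_def)
        ultimately show ?thesis by simp
      qed
      finally show ?thesis using pr by simp
    qed
  qed
  then show "\<exists>M>0. \<exists>k0. \<forall>k\<ge>k0. measure_pmf.prob (P k) {\<omega>. \<bar>X k \<omega>\<bar> > M * r k} < \<epsilon>"
    using M0 by blast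
qed

lemma psd_gram:
  fixes v :: "nat \<Rightarrow> nat \<Rightarrow> real"
  assumes c: "0 \<le> c"
  shows "0 \<le> (\<Sum>h<H. \<Sum>h'<H. x h * (\<Sum>t<T. c * v t h * v t h') * x h')"
proof -
  have "(\<Sum>h<H. \<Sum>h'<H. x h * (\<Sum>t<T. c * v t h * v t h') * x h')
      = (\<Sum>h<H. \<Sum>h'<H. \<Sum>t<T. c * (x h * v t h) * (x h' * v t h'))"
    by (intro sum.cong refl) (simp add: sum_distrib_left sum_distrib_right mult_ac)
  also have "\<dots> = (\<Sum>h<H. \<Sum>t<T. \<Sum>h'<H. c * (x h * v t h) * (x h' * v t h'))"
    by (intro sum.cong refl sum.swap)
  also have "\<dots> = (\<Sum>t<T. \<Sum>h<H. \<Sum>h'<H. c * (x h * v t h) * (x h' * v t h'))"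
    by (rule sum.swap)
  also have "\<dots> = (\<Sum>t<T. c * (\<Sum>h<H. x h * v t h)^2)"
    by (intro sum.cong refl) (simp add: power2_eq_square sum_distrib_left sum_distrib_right mult_ac)
  also have "0 \<le> \<dots>" using c by (intro sum_nonneg mult_nonneg_nonneg) auto
  finally show ?thesis .
qed


context design
begin

lemma Ex_expect: "measure_pmf.expectation (complete_rand n Q m) f = Ex f"
  unfolding complete_rand_def Ex_def A_def[symmetric]
  using integral_pmf_of_set[OF neA finA] by simp

lemma EVhat_eq: "EVhat n Q m Y F h h' = (\<Sum>q<Q. F q h * (Spop n Y q q / real (m q)) * F q h')"
proof -
  have "EVhat n Q m Y F h h' = Ex (\<lambda>z. \<Sum>q<Q. F q h * (Shat n m Y z q / real (m q)) * F q h')"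
    unfolding EVhat_def Ex_expect Vhat_def ..
  also have "\<dots> = (\<Sum>q<Q. F q h * (Ex (\<lambda>z. Shat n m Y z q) / real (m q)) * F q h')"
    by (simp add: Ex_sum Ex_cmult Ex_multc Ex_divc)
  also have "\<dots> = (\<Sum>q<Q. F q h * (Spop n Y q q / real (m q)) * F q h')"
    by (intro sum.cong refl) (simp add: Ex_shat)
  finally show ?thesis .
qed

lemma diff_gram:
  "EVhat n Q m Y F h h' - Vgamma n Q m Y F h h'
    = (\<Sum>i<n. (1 / (real n * (real n - 1))) * (\<Sum>q<Q. F q h * e q i) * (\<Sum>q<Q. F q h' * e q i))"
proof -
  have vg: "Vgamma n Q m Y F h h' = (\<Sum>q<Q. F q h * (Spop n Y q q / real (m q)) * F q h')
      - (\<Sum>q<Q. \<Sum>q'<Q. F q h * (Spop n Y q q' / real n) * F q' h')"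
  proof -
    have "Vgamma n Q m Y F h h' = (\<Sum>q<Q. \<Sum>q'<Q. F q h * (if q = q' then Spop n Y q q / real (m q) else 0) * F q' h'
        - F q h * (Spop n Y q q' / real n) * F q' h')"
      unfolding Vgamma_def VY_def by (intro sum.cong refl) (simp add: algebra_simps)
    also have "\<dots> = (\<Sum>q<Q. (\<Sum>q'<Q. F q h * (if q = q' then Spop n Y q q / real (m q) else 0) * F q' h')
        - (\<Sum>q'<Q. F q h * (Spop n Y q q' / real n) * F q' h'))"
      by (simp only: sum_subtractf)
    also have "\<dots> = (\<Sum>q<Q. F q h * (Spop n Y q q / real (m q)) * F q h'
        - (\<Sum>q'<Q. F q h * (Spop n Y q q' / real n) * F q' h'))"
    proof (intro sum.cong refl)
      fix q assume q: "q \<in> {..<Q}"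
      have "(\<Sum>q'<Q. F q h * (if q = q' then Spop n Y q q / real (m q) else 0) * F q' h')
          = (\<Sum>q'<Q. if q = q' then F q h * (Spop n Y q q / real (m q)) * F q h' else 0)"
        by (intro sum.cong refl) auto
      also have "\<dots> = F q h * (Spop n Y q q / real (m q)) * F q h'" using q by (simp add: sum.delta)
      finally show "(\<Sum>q'<Q. F q h * (if q = q' then Spop n Y q q / real (m q) else 0) * F q' h')
        - (\<Sum>q'<Q. F q h * (Spop n Y q q' / real n) * F q' h')
        = F q h * (Spop n Y q q / real (m q)) * F q h' - (\<Sum>q'<Q. F q h * (Spop n Y q q' / real n) * F q' h')"
        by simp
    qed
    also have "\<dots> = (\<Sum>q<Q. F q h * (Spop n Y q q / real (m q)) * F q h')
      - (\<Sum>q<Q. \<Sum>q'<Q. F q h * (Spop n Y q q' / real n) * F q' h')"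
      by (simp only: sum_subtractf)
    finally show ?thesis .
  qed
  have "EVhat n Q m Y F h h' - Vgamma n Q m Y F h h' = (\<Sum>q<Q. \<Sum>q'<Q. F q h * (Spop n Y q q' / real n) * F q' h')"
    unfolding EVhat_eq vg by simp
  also have "\<dots> = (\<Sum>q<Q. \<Sum>q'<Q. \<Sum>i<n. (1 / (real n * (real n - 1))) * (F q h * e q i) * (F q' h' * e q' i))"
    unfolding Spop_eq by (intro sum.cong refl) (simp add: sum_distrib_left sum_divide_distrib mult_ac)
  also have "\<dots> = (\<Sum>q<Q. \<Sum>i<n. \<Sum>q'<Q. (1 / (real n * (real n - 1))) * (F q h * e q i) * (F q' h' * e q' i))"
    by (intro sum.cong refl sum.swap)
  also have "\<dots> = (\<Sum>i<n. \<Sum>q<Q. \<Sum>q'<Q. (1 / (real n * (real n - 1))) * (F q h * e q i) * (F q' h' * e q' i))"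
    by (rule sum.swap)
  also have "\<dots> = (\<Sum>i<n. (1 / (real n * (real n - 1))) * (\<Sum>q<Q. F q h * e q i) * (\<Sum>q<Q. F q h' * e q i))"
    by (intro sum.cong refl) (simp add: sum_distrib_left sum_distrib_right sum_divide_distrib mult_ac)
  finally show ?thesis .
qed

lemma psd_part: "psd H (\<lambda>h h'. EVhat n Q m Y F h h' - Vgamma n Q m Y F h h')"
  unfolding psd_def diff_gram
proof
  fix x :: "nat \<Rightarrow> real"
  have c: "0 \<le> 1 / (real n * (real n - 1))" using n_ge2 by simp
  show "0 \<le> (\<Sum>h<H. \<Sum>h'<H. x h * (\<Sum>i<n. 1 / (real n * (real n - 1)) * (\<Sum>q<Q. F q h * e q i) * (\<Sum>q<Q. F q h' * e q i)) * x h')"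
    using psd_gram[OF c, where H=H and x=x and T=n and v="\<lambda>i h. \<Sum>q<Q. F q h * e q i"] by simp
qed

lemma entry_eq:
  "Vhat n Q m Y F z h h' - EVhat n Q m Y F h h'
     = (\<Sum>q<Q. (F q h * F q h') * (Shat n m Y z q - Spop n Y q q) / real (m q))"
  unfolding Vhat_def EVhat_eq by (simp add: sum_subtractf[symmetric] algebra_simps diff_divide_distrib)

lemma frob_bound:
  fixes D :: real
  assumes mom: "\<And>q. q < Q \<Longrightarrow> (\<Sum>i<n. (e q i)^4) \<le> real n * D"
  shows "Ex (\<lambda>z. \<Sum>h<H. \<Sum>h'<H. (Vhat n Q m Y F z h h' - EVhat n Q m Y F h h')^2)
    \<le> real H ^ 2 * (D * (max_norm Q H F)^4 * (192 * (\<Sum>q<Q. 1 / real (m q))^2 / real n + 208 * (\<Sum>q<Q. 1 / real (m q) ^ 3)))"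
proof -
  let ?Fm = "max_norm Q H F"
  have D0: "0 \<le> D" by (rule D4_nonneg[OF mom])
  have entry: "Ex (\<lambda>z. (Vhat n Q m Y F z h h' - EVhat n Q m Y F h h')^2)
      \<le> D * ?Fm^4 * (192 * (\<Sum>q<Q. 1 / real (m q))^2 / real n + 208 * (\<Sum>q<Q. 1 / real (m q) ^ 3))"
    if h: "h < H" "h' < H" for h h'
  proof -
    let ?a = "\<lambda>q. F q h * F q h'"
    have ab: "\<bar>?a q\<bar> \<le> ?Fm^2" if "q < Q" for q
    proof -
      have "\<bar>F q h\<bar> \<le> ?Fm" "\<bar>F q h'\<bar> \<le> ?Fm" using that h by (auto intro: max_norm_entry)
      then have "\<bar>F q h\<bar> * \<bar>F q h'\<bar> \<le> ?Fm * ?Fm" by (intro mult_mono) auto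
      then show ?thesis by (simp add: abs_mult power2_eq_square)
    qed
    have "Ex (\<lambda>z. (Vhat n Q m Y F z h h' - EVhat n Q m Y F h h')^2)
        = Ex (\<lambda>z. (\<Sum>q<Q. ?a q * (Shat n m Y z q - Spop n Y q q) / real (m q))^2)"
      by (simp only: entry_eq)
    also have "\<dots> \<le> D * (192 * (\<Sum>q<Q. \<bar>?a q\<bar> / real (m q))^2 / real n + 208 * (\<Sum>q<Q. (?a q)^2 / real (m q) ^ 3))"
      by (rule var_bound[OF mom])
    also have "\<dots> \<le> D * (192 * (\<Sum>q<Q. ?Fm^2 * (1 / real (m q)))^2 / real n + 208 * (\<Sum>q<Q. ?Fm^4 * (1 / real (m q) ^ 3)))"
    proof (intro mult_left_mono D0 add_mono divide_right_mono mult_left_mono power_mono sum_mono)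
      fix q assume "q \<in> {..<Q}"
      then have q: "q < Q" by simp
      show "\<bar>?a q\<bar> / real (m q) \<le> ?Fm^2 * (1 / real (m q))" using ab[OF q] by (simp add: divide_right_mono)
      have "(?a q)^2 \<le> (?Fm^2)^2" using ab[OF q] by (metis abs_ge_zero power2_abs power_mono)
      then show "(?a q)^2 / real (m q) ^ 3 \<le> ?Fm^4 * (1 / real (m q) ^ 3)" by (simp add: divide_right_mono power_mult[symmetric])
    qed (auto intro: sum_nonneg)
    also have "\<dots> = D * ?Fm^4 * (192 * (\<Sum>q<Q. 1 / real (m q))^2 / real n + 208 * (\<Sum>q<Q. 1 / real (m q) ^ 3))"
    proof -
      have s1: "(\<Sum>q<Q. ?Fm^2 * (1 / real (m q))) = ?Fm^2 * (\<Sum>q<Q. 1 / real (m q))" by (rule sum_distrib_left[symmetric])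
      have s2: "(\<Sum>q<Q. ?Fm^4 * (1 / real (m q) ^ 3)) = ?Fm^4 * (\<Sum>q<Q. 1 / real (m q) ^ 3)" by (rule sum_distrib_left[symmetric])
      have p4: "(?Fm^2 * (\<Sum>q<Q. 1 / real (m q)))^2 = ?Fm^4 * (\<Sum>q<Q. 1 / real (m q))^2"
        by (simp add: power_mult_distrib power_mult[symmetric])
      show ?thesis unfolding s1 s2 p4 by (simp add: algebra_simps)
    qed
    finally show ?thesis .
  qed
  have "Ex (\<lambda>z. \<Sum>h<H. \<Sum>h'<H. (Vhat n Q m Y F z h h' - EVhat n Q m Y F h h')^2)
      = (\<Sum>h<H. \<Sum>h'<H. Ex (\<lambda>z. (Vhat n Q m Y F z h h' - EVhat n Q m Y F h h')^2))"
    by (simp add: Ex_sum)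
  also have "\<dots> \<le> (\<Sum>h<H. \<Sum>h'<H. D * ?Fm^4 * (192 * (\<Sum>q<Q. 1 / real (m q))^2 / real n + 208 * (\<Sum>q<Q. 1 / real (m q) ^ 3)))"
    using entry by (intro sum_mono) auto
  also have "\<dots> = real H ^ 2 * (D * ?Fm^4 * (192 * (\<Sum>q<Q. 1 / real (m q))^2 / real n + 208 * (\<Sum>q<Q. 1 / real (m q) ^ 3)))"
    by (simp add: power2_eq_square)
  finally show ?thesis .
qed

end


lemma rate_arith:
  fixes Q :: nat and n cup clow :: real and m :: "nat \<Rightarrow> nat"
  assumes inv: "\<And>q. q < Q \<Longrightarrow> 1 / real (m q) \<le> real Q * cup / (clow * n)"
    and mpos: "\<And>q. q < Q \<Longrightarrow> 0 < m q" and n: "0 < n" and c: "0 < clow" "0 < cup"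
  shows "192 * (\<Sum>q<Q. 1 / real (m q))^2 / n + 208 * (\<Sum>q<Q. 1 / real (m q) ^ 3)
     \<le> (192 * cup^2 / clow^2 + 208 * cup^3 / clow^3) * (real Q ^ 4 / n ^ 3)"
proof -
  let ?K = "real Q * cup / (clow * n)"
  have K0: "0 \<le> ?K" using n c by simp
  have s1: "(\<Sum>q<Q. 1 / real (m q)) \<le> real Q * ?K"
    using sum_bounded_above[of "{..<Q}" "\<lambda>q. 1 / real (m q)" ?K] inv by simp
  have s1': "0 \<le> (\<Sum>q<Q. 1 / real (m q))" by (intro sum_nonneg) simp
  have s3: "(\<Sum>q<Q. 1 / real (m q) ^ 3) \<le> real Q * ?K ^ 3"
  proof -
    have "\<And>q. q < Q \<Longrightarrow> 1 / real (m q) ^ 3 \<le> ?K ^ 3"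
    proof -
      fix q assume q: "q < Q"
      have "(1 / real (m q)) ^ 3 \<le> ?K ^ 3" using inv[OF q] by (intro power_mono) auto
      then show "1 / real (m q) ^ 3 \<le> ?K ^ 3" by (simp add: power_one_over)
    qed
    then show ?thesis using sum_bounded_above[of "{..<Q}" "\<lambda>q. 1 / real (m q) ^ 3" "?K ^ 3"] by simp
  qed
  have "192 * (\<Sum>q<Q. 1 / real (m q))^2 / n \<le> 192 * (real Q * ?K)^2 / n"
    using s1 s1' n by (intro divide_right_mono mult_left_mono power_mono) auto
  also have "\<dots> = 192 * cup^2 / clow^2 * (real Q ^ 4 / n ^ 3)"
    using n c by (simp add: field_simps power2_eq_square power3_eq_cube power4_eq_xxxx)
  finally have A: "192 * (\<Sum>q<Q. 1 / real (m q))^2 / n \<le> 192 * cup^2 / clow^2 * (real Q ^ 4 / n ^ 3)" .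
  have "208 * (\<Sum>q<Q. 1 / real (m q) ^ 3) \<le> 208 * (real Q * ?K ^ 3)" using s3 by simp
  also have "\<dots> = 208 * cup^3 / clow^3 * (real Q ^ 4 / n ^ 3)"
    using n c by (simp add: field_simps power2_eq_square power3_eq_cube power4_eq_xxxx)
  finally have B: "208 * (\<Sum>q<Q. 1 / real (m q) ^ 3) \<le> 208 * cup^3 / clow^3 * (real Q ^ 4 / n ^ 3)" .
  show ?thesis using add_mono[OF A B] by (simp only: distrib_right)
qed

theorem theorem3:
  fixes N Q H :: "nat \<Rightarrow> nat"
    and Ng :: "nat \<Rightarrow> nat \<Rightarrow> nat"
    and N0 :: "nat \<Rightarrow> nat"
    and c :: "nat \<Rightarrow> nat \<Rightarrow> real"
    and clow cup :: real
    and Y :: "nat \<Rightarrow> nat \<Rightarrow> nat \<Rightarrow> real"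
    and F :: "nat \<Rightarrow> nat \<Rightarrow> nat \<Rightarrow> real"
    and \<Delta> :: "nat \<Rightarrow> real"
  assumes Qpos: "\<And>k. 1 \<le> Q k"
    and Hpos: "\<And>k. 1 \<le> H k"
    and sizes: "\<And>k. (\<Sum>q<Q k. Ng k q) = N k"
    and min_size: "\<And>k q. q < Q k \<Longrightarrow> 2 \<le> Ng k q"
    and c_bounds: "0 < clow" "clow \<le> cup"
    and nearly_uniform: "\<And>k. 0 < N0 k \<and>
          (\<forall>q<Q k. real (Ng k q) = c k q * real (N0 k) \<and> clow \<le> c k q \<and> c k q \<le> cup)"
    and cond3: "\<And>k q. q < Q k \<Longrightarrow>
          (\<Sum>i<N k. (Y k i q - Ybar (N k) (Y k) q) ^ 4) / real (N k) \<le> \<Delta> k ^ 4"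
  shows
    "(\<forall>k. psd (H k) (\<lambda>h h'. EVhat (N k) (Q k) (Ng k) (Y k) (F k) h h'
                              - Vgamma (N k) (Q k) (Ng k) (Y k) (F k) h h'))
     \<and> bigO_P (\<lambda>k. complete_rand (N k) (Q k) (Ng k))
         (\<lambda>k z. (max_norm (H k) (H k) (\<lambda>h h'. Vhat (N k) (Q k) (Ng k) (Y k) (F k) z h h'
                                      - EVhat (N k) (Q k) (Ng k) (Y k) (F k) h h')) ^ 2)
         (\<lambda>k. max_norm (Q k) (H k) (F k) ^ 4 * real (Q k) ^ 4 / real (N k) ^ 3
               * \<Delta> k ^ 4 * real (H k) ^ 2)
     \<and> bigO_P (\<lambda>k. complete_rand (N k) (Q k) (Ng k))
         (\<lambda>k z. (op_norm (H k) (H k) (\<lambda>h h'. Vhat (N k) (Q k) (Ng k) (Y k) (F k) z h h'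
                                      - EVhat (N k) (Q k) (Ng k) (Y k) (F k) h h')) ^ 2)
         (\<lambda>k. max_norm (Q k) (H k) (F k) ^ 4 * real (Q k) ^ 4 / real (N k) ^ 3
               * \<Delta> k ^ 4 * real (H k) ^ 4)"
proof -
  have D: "design (N k) (Q k) (Ng k)" for k
    using Qpos sizes min_size by (unfold_locales) auto
  define Cc where "Cc = 192 * cup^2 / clow^2 + 208 * cup^3 / clow^3"
  have C0: "0 \<le> Cc" using c_bounds by (simp add: Cc_def)
  define Fr where "Fr k z = (\<Sum>h<H k. \<Sum>h'<H k. (Vhat (N k) (Q k) (Ng k) (Y k) (F k) z h h'
                                      - EVhat (N k) (Q k) (Ng k) (Y k) (F k) h h')^2)" for k z
  define r2 where "r2 k = max_norm (Q k) (H k) (F k) ^ 4 * real (Q k) ^ 4 / real (N k) ^ 3 * \<Delta> k ^ 4 * real (H k) ^ 2" for k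
  define r4 where "r4 k = max_norm (Q k) (H k) (F k) ^ 4 * real (Q k) ^ 4 / real (N k) ^ 3 * \<Delta> k ^ 4 * real (H k) ^ 4" for k
  have r2_0: "0 \<le> r2 k" for k
    unfolding r2_def by (intro mult_nonneg_nonneg divide_nonneg_nonneg) (auto simp: zero_le_even_power)
  have r2_le: "r2 k \<le> r4 k" for k
  proof -
    have "real (H k) ^ 2 \<le> real (H k) ^ 4" using Hpos[of k] by (intro power_increasing) auto
    moreover have "0 \<le> max_norm (Q k) (H k) (F k) ^ 4 * real (Q k) ^ 4 / real (N k) ^ 3 * \<Delta> k ^ 4"
      by (intro mult_nonneg_nonneg divide_nonneg_nonneg) (auto simp: zero_le_even_power)
    ultimately show ?thesis unfolding r2_def r4_def by (intro mult_left_mono) auto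
  qed
  have Fr_mean: "design.Ex (N k) (Q k) (Ng k) (Fr k) \<le> Cc * r2 k" for k
  proof -
    interpret d: design "N k" "Q k" "Ng k" "Y k" by (rule D)
    let ?n = "N k"
    have mom: "(\<Sum>i<N k. (d.e q i)^4) \<le> real (N k) * \<Delta> k ^ 4" if "q < Q k" for q
    proof -
      have "(\<Sum>i<N k. (d.e q i)^4) / real (N k) \<le> \<Delta> k ^ 4"
        using cond3[OF that] by (simp add: d.e_def)
      then show ?thesis using d.n_ge2 by (simp add: divide_le_eq mult.commute)
    qed
    have nu: "0 < N0 k" "\<And>q. q < Q k \<Longrightarrow> real (Ng k q) = c k q * real (N0 k) \<and> clow \<le> c k q \<and> c k q \<le> cup"
      using nearly_uniform[of k] by auto
    have npos: "0 < real (N k)" using d.n_ge2 by simp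
    have n_le: "real (N k) \<le> real (Q k) * cup * real (N0 k)"
    proof -
      have "real (N k) = (\<Sum>q<Q k. real (Ng k q))" using sizes[of k] by (simp flip: of_nat_sum)
      also have "\<dots> \<le> (\<Sum>q<Q k. cup * real (N0 k))"
        using nu by (intro sum_mono) (simp add: mult_right_mono)
      finally show ?thesis by simp
    qed
    have inv: "1 / real (Ng k q) \<le> real (Q k) * cup / (clow * real (N k))" if q: "q < Q k" for q
    proof -
      have mq: "clow * real (N0 k) \<le> real (Ng k q)" using nu(2)[OF q] nu(1) by (simp add: mult_right_mono)
      have mpos: "0 < real (Ng k q)" using min_size[OF q] by simp
      have "clow * real (N k) \<le> clow * (real (Q k) * cup * real (N0 k))"
        using n_le c_bounds by (intro mult_left_mono) auto
      also have "\<dots> = real (Q k) * cup * (clow * real (N0 k))" by (simp add: mult_ac)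
      also have "\<dots> \<le> real (Q k) * cup * real (Ng k q)"
        using mq c_bounds by (intro mult_left_mono) auto
      finally have "clow * real (N k) \<le> real (Q k) * cup * real (Ng k q)" .
      then show ?thesis using mpos npos c_bounds by (simp add: divide_simps mult_ac)
    qed
    have "d.Ex (Fr k) \<le> real (H k) ^ 2 * (\<Delta> k ^ 4 * (max_norm (Q k) (H k) (F k))^4 *
        (192 * (\<Sum>q<Q k. 1 / real (Ng k q))^2 / real (N k) + 208 * (\<Sum>q<Q k. 1 / real (Ng k q) ^ 3)))"
      unfolding Fr_def by (rule d.frob_bound[OF mom])
    also have "\<dots> \<le> real (H k) ^ 2 * (\<Delta> k ^ 4 * (max_norm (Q k) (H k) (F k))^4 *
        (Cc * (real (Q k) ^ 4 / real (N k) ^ 3)))"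
    proof -
      have mp: "\<And>q. q < Q k \<Longrightarrow> 0 < Ng k q" using min_size[of _ k] by fastforce
      have cp: "0 < cup" using c_bounds by simp
      have ra: "192 * (\<Sum>q<Q k. 1 / real (Ng k q))^2 / real (N k) + 208 * (\<Sum>q<Q k. 1 / real (Ng k q) ^ 3)
          \<le> Cc * (real (Q k) ^ 4 / real (N k) ^ 3)"
        unfolding Cc_def by (rule rate_arith[OF inv mp npos c_bounds(1) cp])
      show ?thesis using ra by (intro mult_left_mono) (auto simp: zero_le_even_power)
    qed
    also have "\<dots> = Cc * r2 k" unfolding r2_def by (simp add: mult_ac)
    finally show ?thesis .
  qed
  have fin: "finite (assignments (N k) (Q k) (Ng k))" for k by (rule assignments_finite)
  have ne: "assignments (N k) (Q k) (Ng k) \<noteq> {}" for k by (rule assignments_nonempty[OF sizes])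
  have ExA: "design.Ex (N k) (Q k) (Ng k) f = (\<Sum>z\<in>assignments (N k) (Q k) (Ng k). f z) / card (assignments (N k) (Q k) (Ng k))" for k f
    using D[of k] by (simp add: design.Ex_def design.A_def)
  have mean_gen: "(\<Sum>z\<in>assignments (N k) (Q k) (Ng k). X z) / card (assignments (N k) (Q k) (Ng k)) \<le> Cc * r k"
    if Xle: "\<And>z. X z \<le> Fr k z" and rr: "r2 k \<le> r k" for X k r
  proof -
    have "(\<Sum>z\<in>assignments (N k) (Q k) (Ng k). X z) / card (assignments (N k) (Q k) (Ng k))
        \<le> (\<Sum>z\<in>assignments (N k) (Q k) (Ng k). Fr k z) / card (assignments (N k) (Q k) (Ng k))"
      by (intro divide_right_mono sum_mono Xle) simp
    also have "\<dots> \<le> Cc * r2 k" using Fr_mean[of k] by (simp add: ExA)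
    also have "\<dots> \<le> Cc * r k" using rr C0 by (intro mult_left_mono) auto
    finally show ?thesis .
  qed
  show ?thesis
  proof (intro conjI allI)
    fix k show "psd (H k) (\<lambda>h h'. EVhat (N k) (Q k) (Ng k) (Y k) (F k) h h' - Vgamma (N k) (Q k) (Ng k) (Y k) (F k) h h')"
      by (rule design.psd_part[OF D])
  next
    show "bigO_P (\<lambda>k. complete_rand (N k) (Q k) (Ng k))
         (\<lambda>k z. (max_norm (H k) (H k) (\<lambda>h h'. Vhat (N k) (Q k) (Ng k) (Y k) (F k) z h h'
                                      - EVhat (N k) (Q k) (Ng k) (Y k) (F k) h h')) ^ 2)
         (\<lambda>k. max_norm (Q k) (H k) (F k) ^ 4 * real (Q k) ^ 4 / real (N k) ^ 3
               * \<Delta> k ^ 4 * real (H k) ^ 2)"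
      unfolding r2_def[symmetric]
    proof (rule bigO_from_mean[where S = "\<lambda>k. assignments (N k) (Q k) (Ng k)" and C = Cc])
      show "\<And>k. complete_rand (N k) (Q k) (Ng k) = pmf_of_set (assignments (N k) (Q k) (Ng k))"
        by (simp add: complete_rand_def)
    qed (auto simp: fin ne r2_0 C0 intro!: mean_gen max_norm_sq_le[unfolded Fr_def] simp: Fr_def)
  next
    show "bigO_P (\<lambda>k. complete_rand (N k) (Q k) (Ng k))
         (\<lambda>k z. (op_norm (H k) (H k) (\<lambda>h h'. Vhat (N k) (Q k) (Ng k) (Y k) (F k) z h h'
                                      - EVhat (N k) (Q k) (Ng k) (Y k) (F k) h h')) ^ 2)
         (\<lambda>k. max_norm (Q k) (H k) (F k) ^ 4 * real (Q k) ^ 4 / real (N k) ^ 3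
               * \<Delta> k ^ 4 * real (H k) ^ 4)"
      unfolding r4_def[symmetric]
    proof (rule bigO_from_mean[where S = "\<lambda>k. assignments (N k) (Q k) (Ng k)" and C = Cc])
      show "\<And>k. complete_rand (N k) (Q k) (Ng k) = pmf_of_set (assignments (N k) (Q k) (Ng k))"
        by (simp add: complete_rand_def)
      show "\<And>k. 0 \<le> r4 k" using r2_0 r2_le order.trans by blast
    qed (auto simp: fin ne C0 intro!: mean_gen op_norm_sq_le r2_le simp: Fr_def)
  qed
qed


end
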